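(* Let $(M^{2m},F,g)$ be a para-Kähler-Norden manifold, let $V$ be a unit parallel vector field on $M$, let $\alpha:M\to(0,\infty)$ be smooth with $(FV)(\alpha)=0$, and let $g^{\alpha}(X,Y)=\alpha\big(g(X,Y)+g(X,FV)g(Y,FV)\big)$. If $\sigma$ and $\widetilde{\sigma}$ denote the scalar curvatures of $g$ and $g^{\alpha}$, then $$\widetilde{\sigma}=\frac{1}{\alpha}\sigma-\frac{2m-1}{\alpha^{2}}\Delta(\alpha)-\frac{(2m-1)(m-3)}{2\alpha^{3}}\|\mathrm{grad}\,\alpha\|^{2}.$$
   Context: A para-Kähler-Norden manifold $(M^{2m},F,g)$: $M$ is a $2m$-dimensional smooth manifold, $F$ is a $(1,1)$-tensor field with $F^2=I$ whose eigenbundles for the eigenvalues $+1,-1$ have the same rank, $g$ is a Riemannian metric with $g(FX,Y)=g(X,FY)$, and $\nabla F=0$ for the Levi-Civita connection $\nabla$ of $g$. $V$ unit parallel means $g(V,V)=1$, $\nabla V=0$. $\mathrm{grad}\,\alpha$ is the $g$-gradient, $\|\cdot\|$ the $g$-norm, $\Delta(\alpha)=\sum_i g(\nabla_{e_i}\mathrm{grad}\,\alpha,e_i)$ over a $g$-orthonormal frame. Scalar curvature is the trace of the Ricci curvature with respect to the respective metric. *)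

theory Defs
  imports "HOL-Analysis.Analysis"
begin

text \<open>Local-coordinate Riemannian geometry on an open set U of real^'n
  (a single chart). Tensor fields are given by their components.
  Matrix entries: G x $ i $ j = g_ij, F x $ i $ j = F^i_j, V x $ i = V^i.\<close>

definition pd :: "'n::finite \<Rightarrow> (real^'n \<Rightarrow> real) \<Rightarrow> real^'n \<Rightarrow> real" where
  "pd i f x = deriv (\<lambda>t. f (x + t *\<^sub>R axis i 1)) 0"

fun iterpd :: "'n::finite list \<Rightarrow> (real^'n \<Rightarrow> real) \<Rightarrow> real^'n \<Rightarrow> real" where
  "iterpd [] f = f"
| "iterpd (i # is) f = pd i (iterpd is f)"

definition smooth_on :: "(real^'n::finite) set \<Rightarrow> (real^'n \<Rightarrow> real) \<Rightarrow> bool" where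
  "smooth_on U f \<longleftrightarrow> (\<forall>is. iterpd is f differentiable_on U)"

definition ginv :: "(real^'n::finite \<Rightarrow> real^'n^'n) \<Rightarrow> real^'n \<Rightarrow> real^'n^'n" where
  "ginv G x = matrix_inv (G x)"

text \<open>Christoffel symbols of the Levi-Civita connection: christ G x k i j = Gamma^k_ij.\<close>
definition christ :: "(real^'n::finite \<Rightarrow> real^'n^'n) \<Rightarrow> real^'n \<Rightarrow> 'n \<Rightarrow> 'n \<Rightarrow> 'n \<Rightarrow> real" where
  "christ G x k i j = (1/2) * (\<Sum>l\<in>UNIV. ginv G x $ k $ l *
      (pd i (\<lambda>y. G y $ j $ l) x + pd j (\<lambda>y. G y $ i $ l) x - pd l (\<lambda>y. G y $ i $ j) x))"

text \<open>Riemann tensor R^r_{s mu nu}, Ricci tensor Ric_{s nu} = R^r_{s r nu},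
  scalar curvature g^{s nu} Ric_{s nu}.\<close>
definition riem :: "(real^'n::finite \<Rightarrow> real^'n^'n) \<Rightarrow> real^'n \<Rightarrow> 'n \<Rightarrow> 'n \<Rightarrow> 'n \<Rightarrow> 'n \<Rightarrow> real" where
  "riem G x r s \<mu> \<nu> = pd \<mu> (\<lambda>y. christ G y r \<nu> s) x - pd \<nu> (\<lambda>y. christ G y r \<mu> s) x
     + (\<Sum>l\<in>UNIV. christ G x r \<mu> l * christ G x l \<nu> s - christ G x r \<nu> l * christ G x l \<mu> s)"

definition ricci :: "(real^'n::finite \<Rightarrow> real^'n^'n) \<Rightarrow> real^'n \<Rightarrow> 'n \<Rightarrow> 'n \<Rightarrow> real" where
  "ricci G x s \<nu> = (\<Sum>r\<in>UNIV. riem G x r s r \<nu>)"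

definition scal :: "(real^'n::finite \<Rightarrow> real^'n^'n) \<Rightarrow> real^'n \<Rightarrow> real" where
  "scal G x = (\<Sum>s\<in>UNIV. \<Sum>\<nu>\<in>UNIV. ginv G x $ s $ \<nu> * ricci G x s \<nu>)"

definition gradc :: "(real^'n::finite \<Rightarrow> real^'n^'n) \<Rightarrow> (real^'n \<Rightarrow> real) \<Rightarrow> real^'n \<Rightarrow> 'n \<Rightarrow> real" where
  "gradc G f x k = (\<Sum>j\<in>UNIV. ginv G x $ k $ j * pd j f x)"

definition grad_normsq :: "(real^'n::finite \<Rightarrow> real^'n^'n) \<Rightarrow> (real^'n \<Rightarrow> real) \<Rightarrow> real^'n \<Rightarrow> real" where
  "grad_normsq G f x = (\<Sum>i\<in>UNIV. \<Sum>j\<in>UNIV. G x $ i $ j * gradc G f x i * gradc G f x j)"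

definition laplacian :: "(real^'n::finite \<Rightarrow> real^'n^'n) \<Rightarrow> (real^'n \<Rightarrow> real) \<Rightarrow> real^'n \<Rightarrow> real" where
  "laplacian G f x = (\<Sum>i\<in>UNIV. pd i (\<lambda>y. gradc G f y i) x
      + (\<Sum>k\<in>UNIV. christ G x i i k * gradc G f x k))"

definition riemannian_metric_on :: "(real^'n::finite) set \<Rightarrow> (real^'n \<Rightarrow> real^'n^'n) \<Rightarrow> bool" where
  "riemannian_metric_on U G \<longleftrightarrow>
     (\<forall>a b. smooth_on U (\<lambda>y. G y $ a $ b)) \<and>
     (\<forall>x\<in>U. transpose (G x) = G x \<and> (\<forall>v. v \<noteq> 0 \<longrightarrow> v \<bullet> (G x *v v) > 0))"

definition nablaF :: "(real^'n::finite \<Rightarrow> real^'n^'n) \<Rightarrow> (real^'n \<Rightarrow> real^'n^'n) \<Rightarrow> real^'n \<Rightarrow> 'n \<Rightarrow> 'n \<Rightarrow> 'n \<Rightarrow> real" where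
  "nablaF G F x k i j = pd k (\<lambda>y. F y $ i $ j) x
     + (\<Sum>l\<in>UNIV. christ G x i k l * F x $ l $ j - christ G x l k j * F x $ i $ l)"

definition para_kaehler_norden :: "(real^'n::finite) set \<Rightarrow> (real^'n \<Rightarrow> real^'n^'n) \<Rightarrow> (real^'n \<Rightarrow> real^'n^'n) \<Rightarrow> bool" where
  "para_kaehler_norden U F G \<longleftrightarrow>
     riemannian_metric_on U G \<and>
     (\<forall>i j. smooth_on U (\<lambda>y. F y $ i $ j)) \<and>
     (\<forall>x\<in>U. F x ** F x = mat 1 \<and>
        dim {v. F x *v v = v} = dim {v. F x *v v = - v} \<and>
        transpose (F x) ** G x = G x ** F x \<and>
        (\<forall>k i j. nablaF G F x k i j = 0))"

definition unit_parallel :: "(real^'n::finite) set \<Rightarrow> (real^'n \<Rightarrow> real^'n^'n) \<Rightarrow> (real^'n \<Rightarrow> real^'n) \<Rightarrow> bool" where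
  "unit_parallel U G V \<longleftrightarrow>
     (\<forall>i. smooth_on U (\<lambda>y. V y $ i)) \<and>
     (\<forall>x\<in>U. V x \<bullet> (G x *v V x) = 1 \<and>
        (\<forall>k i. pd k (\<lambda>y. V y $ i) x + (\<Sum>l\<in>UNIV. christ G x i k l * V x $ l) = 0))"

definition deformed_metric :: "(real^'n::finite \<Rightarrow> real^'n^'n) \<Rightarrow> (real^'n \<Rightarrow> real^'n^'n) \<Rightarrow> (real^'n \<Rightarrow> real^'n) \<Rightarrow> (real^'n \<Rightarrow> real) \<Rightarrow> real^'n \<Rightarrow> real^'n^'n" where
  "deformed_metric G F V \<alpha> x = \<alpha> x *\<^sub>R (G x + (\<chi> i j. (G x *v (F x *v V x)) $ i * (G x *v (F x *v V x)) $ j))"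

end

theory Submission
  imports Defs
begin

lemma pd_has_derivative:
  fixes f :: "real^'n::finite \<Rightarrow> real"
  assumes "(f has_derivative f') (at x)"
  shows "pd i f x = f' (axis i 1)"
proof -
  have l: "bounded_linear f'" using assms has_derivative_bounded_linear by blast
  have "((\<lambda>t. x + t *\<^sub>R axis i 1) has_derivative (\<lambda>t. t *\<^sub>R axis i 1)) (at 0)"
    by (auto intro!: derivative_eq_intros)
  then have "((\<lambda>t. f (x + t *\<^sub>R axis i 1)) has_derivative (\<lambda>t. f' (t *\<^sub>R axis i 1))) (at 0)"
    using has_derivative_compose[of "\<lambda>t. x + t *\<^sub>R axis i (1::real)" _ 0 UNIV f f'] assms by simp
  moreover have "(\<lambda>t. f' (t *\<^sub>R axis i 1)) = (\<lambda>t. f' (axis i 1) * t)"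
    using linear_scale[OF bounded_linear.linear[OF l]] by (auto simp: mult.commute)
  ultimately have "DERIV (\<lambda>t. f (x + t *\<^sub>R axis i 1)) 0 :> f' (axis i 1)"
    by (simp add: has_field_derivative_def)
  then show ?thesis unfolding pd_def by (rule DERIV_imp_deriv)
qed

lemma pd_FD:
  fixes f :: "real^'n::finite \<Rightarrow> real"
  assumes "f differentiable (at x)"
  shows "pd i f x = frechet_derivative f (at x) (axis i 1)"
  using assms frechet_derivative_works pd_has_derivative by blast

lemma pd_add:
  fixes f g :: "real^'n::finite \<Rightarrow> real"
  assumes "f differentiable (at x)" "g differentiable (at x)"
  shows "pd i (\<lambda>y. f y + g y) x = pd i f x + pd i g x"
proof -
  obtain f' g' where a: "(f has_derivative f') (at x)" "(g has_derivative g') (at x)"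
    using assms unfolding differentiable_def by blast
  then show ?thesis using pd_has_derivative[OF a(1)] pd_has_derivative[OF a(2)] pd_has_derivative[OF has_derivative_add[OF a]] by simp
qed

lemma pd_diff:
  fixes f g :: "real^'n::finite \<Rightarrow> real"
  assumes "f differentiable (at x)" "g differentiable (at x)"
  shows "pd i (\<lambda>y. f y - g y) x = pd i f x - pd i g x"
proof -
  obtain f' g' where a: "(f has_derivative f') (at x)" "(g has_derivative g') (at x)"
    using assms unfolding differentiable_def by blast
  then show ?thesis using pd_has_derivative[OF a(1)] pd_has_derivative[OF a(2)] pd_has_derivative[OF has_derivative_diff[OF a]] by simp
qed

lemma pd_mult:
  fixes f g :: "real^'n::finite \<Rightarrow> real"
  assumes "f differentiable (at x)" "g differentiable (at x)"
  shows "pd i (\<lambda>y. f y * g y) x = f x * pd i g x + pd i f x * g x"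
proof -
  obtain f' g' where a: "(f has_derivative f') (at x)" "(g has_derivative g') (at x)"
    using assms unfolding differentiable_def by blast
  have "((\<lambda>y. f y * g y) has_derivative (\<lambda>h. f x * g' h + f' h * g x)) (at x)"
    using has_derivative_mult[OF a] by simp
  from pd_has_derivative[OF this] show ?thesis using pd_has_derivative[OF a(1)] pd_has_derivative[OF a(2)] by simp
qed

lemma pd_const [simp]: "pd i (\<lambda>y. c) x = 0"
  by (simp add: pd_def)

lemma pd_cmult:
  fixes f :: "real^'n::finite \<Rightarrow> real"
  assumes "f differentiable (at x)"
  shows "pd i (\<lambda>y. c * f y) x = c * pd i f x"
  using pd_mult[of "\<lambda>y. c" x f i] assms by simp

lemma pd_sum:
  fixes f :: "'a \<Rightarrow> real^'n::finite \<Rightarrow> real"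
  assumes "finite S" "\<And>k. k \<in> S \<Longrightarrow> f k differentiable (at x)"
  shows "pd i (\<lambda>y. \<Sum>k\<in>S. f k y) x = (\<Sum>k\<in>S. pd i (f k) x)"
  using assms
proof (induction S rule: finite_induct)
  case empty
  then show ?case by simp
next
  case (insert a F)
  have d: "(\<lambda>y. \<Sum>k\<in>F. f k y) differentiable (at x)"
    using insert by (intro differentiable_sum) auto
  have "pd i (\<lambda>y. \<Sum>k\<in>insert a F. f k y) x = pd i (\<lambda>y. f a y + (\<Sum>k\<in>F. f k y)) x"
    using insert by simp
  also have "\<dots> = pd i (f a) x + pd i (\<lambda>y. \<Sum>k\<in>F. f k y) x"
    using pd_add[OF _ d, of "f a"] insert by simp
  finally show ?case using insert by simp
qed

lemma pd_divide:
  fixes f g :: "real^'n::finite \<Rightarrow> real"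
  assumes "f differentiable (at x)" "g differentiable (at x)" "g x \<noteq> 0"
  shows "pd i (\<lambda>y. f y / g y) x = (pd i f x * g x - f x * pd i g x) / (g x * g x)"
proof -
  obtain f' g' where a: "(f has_derivative f') (at x)" "(g has_derivative g') (at x)"
    using assms unfolding differentiable_def by blast
  show ?thesis using pd_has_derivative[OF has_derivative_divide'[OF a assms(3)]] pd_has_derivative[OF a(1)] pd_has_derivative[OF a(2)] by simp
qed

lemma pd_cong:
  fixes f g :: "real^'n::finite \<Rightarrow> real"
  assumes "open U" "x \<in> U" "\<And>y. y \<in> U \<Longrightarrow> f y = g y"
  shows "pd i f x = pd i g x"
proof -
  obtain e where e: "e > 0" "ball x e \<subseteq> U" using assms open_contains_ball by blast
  have "eventually (\<lambda>t. f (x + t *\<^sub>R axis i 1) = g (x + t *\<^sub>R axis i 1)) (nhds (0::real))"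
    unfolding eventually_nhds_metric
  proof (intro exI[of _ e] conjI allI impI)
    fix t :: real assume "dist t 0 < e"
    then have "x + t *\<^sub>R axis i 1 \<in> ball x e" by (simp add: dist_norm)
    then show "f (x + t *\<^sub>R axis i 1) = g (x + t *\<^sub>R axis i 1)" using e assms(3) by blast
  qed (use e in auto)
  then show ?thesis unfolding pd_def by (rule deriv_cong_ev) simp
qed

lemma differentiable_cong:
  fixes f g :: "real^'n::finite \<Rightarrow> real"
  assumes "f differentiable (at x)" "open U" "x \<in> U" "\<And>y. y \<in> U \<Longrightarrow> f y = g y"
  shows "g differentiable (at x)"
  using assms has_derivative_transform_within_open unfolding differentiable_def by metis

lemma smooth_diff:
  assumes "smooth_on U f" "open U" "y \<in> U"
  shows "f differentiable (at y)"
  using assms iterpd.simps(1)[of f] differentiable_on_eq_differentiable_at unfolding smooth_on_def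
  by metis

lemma smooth_diff_pd:
  assumes "smooth_on U f" "open U" "y \<in> U"
  shows "pd i f differentiable (at y)"
proof -
  have "iterpd [i] f differentiable_on U" using assms unfolding smooth_on_def by blast
  then show ?thesis using assms differentiable_on_eq_differentiable_at by auto
qed


lemma minv_props:
  fixes A :: "real^'n::finite^'n"
  assumes "invertible A"
  shows "A ** matrix_inv A = mat 1" "matrix_inv A ** A = mat 1"
  using someI_ex[OF assms[unfolded invertible_def]] unfolding matrix_inv_def by auto

lemma minv_unique:
  fixes A B :: "real^'n::finite^'n"
  assumes "A ** B = mat 1"
  shows "matrix_inv A = B"
proof -
  have inv: "invertible A" using assms invertible_right_inverse by blast
  have "matrix_inv A = matrix_inv A ** (A ** B)" using assms by simp
  also have "\<dots> = (matrix_inv A ** A) ** B" by (simp add: matrix_mul_assoc)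
  also have "\<dots> = B" using minv_props[OF inv] by simp
  finally show ?thesis .
qed

lemma posdef_invertible:
  fixes A :: "real^'n::finite^'n"
  assumes "\<forall>v. v \<noteq> 0 \<longrightarrow> v \<bullet> (A *v v) > 0"
  shows "invertible A"
proof -
  have "\<forall>v. A *v v = 0 \<longrightarrow> v = 0" using assms by (metis inner_zero_right less_irrefl)
  then obtain B where "B ** A = mat 1" using matrix_left_invertible_ker by blast
  then show ?thesis using invertible_left_inverse by blast
qed

lemma minv_sym:
  fixes A :: "real^'n::finite^'n"
  assumes "transpose A = A" "invertible A"
  shows "transpose (matrix_inv A) = matrix_inv A"
proof -
  have "transpose (matrix_inv A ** A) = mat 1" using minv_props(2)[OF assms(2)] by (simp add: transpose_mat)
  then have "A ** transpose (matrix_inv A) = mat 1" using assms(1) by (simp add: matrix_transpose_mul)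
  then show ?thesis using minv_unique by metis
qed

lemma minv_cramer:
  fixes A :: "real^'n::finite^'n"
  assumes "invertible A"
  shows "matrix_inv A $ k $ l = det (\<chi> i j. if j = k then axis l 1 $ i else A $ i $ j) / det A"
proof -
  let ?x = "\<chi> k. matrix_inv A $ k $ l"
  have e: "(\<Sum>k\<in>UNIV. A$i$k * matrix_inv A$k$l) = (if i = l then 1 else 0)" for i
  proof -
    have "(A ** matrix_inv A) $ i $ l = mat 1 $ i $ l" by (simp add: minv_props(1)[OF assms])
    then show ?thesis by (simp add: matrix_matrix_mult_def mat_def)
  qed
  have "A *v ?x = axis l 1" unfolding vec_eq_iff matrix_vector_mult_def axis_def using e by simp
  moreover have d: "det A \<noteq> 0" using assms invertible_det_nz by blast
  ultimately have "?x = (\<chi> k. det(\<chi> i j. if j=k then axis l 1 $i else A$i$j) / det A)"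
    using cramer[OF d, THEN iffD1] by blast
  then have "?x $ k = (\<chi> k. det(\<chi> i j. if j=k then axis l 1 $i else A$i$j) / det A) $ k" by simp
  then show ?thesis by simp
qed

lemma differentiable_prod':
  fixes f :: "'a \<Rightarrow> real^'n::finite \<Rightarrow> real"
  assumes "finite S" "\<And>i. i \<in> S \<Longrightarrow> f i differentiable (at x)"
  shows "(\<lambda>y. \<Prod>i\<in>S. f i y) differentiable (at x)"
  using assms by (induction S rule: finite_induct) (auto intro!: differentiable_mult)

lemma det_differentiable:
  fixes M :: "real^'m::finite \<Rightarrow> real^'n::finite^'n"
  assumes "\<And>i j. (\<lambda>y. M y $ i $ j) differentiable (at x)"
  shows "(\<lambda>y. det (M y)) differentiable (at x)"
  unfolding det_def
  by (intro differentiable_sum ballI differentiable_mult differentiable_prod' differentiable_const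
      finite_permutations assms) auto

lemma ginv_differentiable:
  fixes G :: "real^'n::finite \<Rightarrow> real^'n^'n"
  assumes "open U" "x \<in> U" "\<forall>y\<in>U. invertible (G y)" "\<And>i j. (\<lambda>y. G y $ i $ j) differentiable (at x)"
  shows "(\<lambda>y. ginv G y $ k $ l) differentiable (at x)"
proof (rule differentiable_cong[OF _ assms(1,2)])
  show "(\<lambda>y. det (\<chi> i j. if j = k then axis l 1 $ i else G y $ i $ j) / det (G y)) differentiable (at x)"
  proof (intro differentiable_divide det_differentiable)
    fix i j
    show "(\<lambda>y. (\<chi> i j. if j = k then axis l 1 $ i else G y $ i $ j) $ i $ j) differentiable (at x)"
      using assms(4) by (cases "j = k") simp_all
    show "(\<lambda>y. G y $ i $ j) differentiable (at x)" using assms(4) by blast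
    show "det (G x) \<noteq> 0" using assms(2,3) invertible_det_nz by blast
  qed
  fix y assume "y \<in> U"
  then show "det (\<chi> i j. if j = k then axis l 1 $ i else G y $ i $ j) / det (G y) = ginv G y $ k $ l"
    using assms(3) minv_cramer[of "G y" k l] unfolding ginv_def by simp
qed

lemma line_DERIV:
  fixes f :: "real^'n::finite \<Rightarrow> real"
  assumes "(f has_derivative f') (at (w + s0 *\<^sub>R v))"
  shows "DERIV (\<lambda>s. f (w + s *\<^sub>R v)) s0 :> f' v"
proof -
  have l: "bounded_linear f'" using assms has_derivative_bounded_linear by blast
  have 1: "((\<lambda>s. w + s *\<^sub>R v) has_derivative (\<lambda>s. s *\<^sub>R v)) (at s0)"
    by (auto intro!: derivative_eq_intros)
  have "((\<lambda>s. f (w + s *\<^sub>R v)) has_derivative (\<lambda>s. f' (s *\<^sub>R v))) (at s0)"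
    by (rule has_derivative_compose[OF 1, of f f', OF assms])
  moreover have "(\<lambda>s. f' (s *\<^sub>R v)) = (\<lambda>s. f' v * s)"
    using linear_scale[OF bounded_linear.linear[OF l]] by (auto simp: mult.commute)
  ultimately show ?thesis by (simp add: has_field_derivative_def)
qed

lemma line_DERIV_pd:
  fixes f :: "real^'n::finite \<Rightarrow> real"
  assumes "f differentiable (at (w + s0 *\<^sub>R axis i 1))"
  shows "DERIV (\<lambda>s. f (w + s *\<^sub>R axis i 1)) s0 :> pd i f (w + s0 *\<^sub>R axis i 1)"
  using line_DERIV[OF frechet_derivative_works[THEN iffD1, OF assms]] pd_FD[OF assms] by simp


lemma schwarz_aux:
  fixes f :: "real^'n::finite \<Rightarrow> real"
  assumes U: "open U" "x \<in> U" and df: "\<And>y. y \<in> U \<Longrightarrow> f differentiable (at y)"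
    and dp: "(pd i f has_derivative p') (at x)" and e: "e > 0"
  shows "\<exists>d>0. \<forall>t. t \<noteq> 0 \<and> \<bar>t\<bar> < d \<longrightarrow>
     \<bar>(f (x + t *\<^sub>R axis i 1 + t *\<^sub>R axis j 1) - f (x + t *\<^sub>R axis i 1) - f (x + t *\<^sub>R axis j 1) + f x) / t^2
       - p' (axis j 1)\<bar> \<le> 3 * e"
proof -
  define ei where "ei = axis i (1::real)"
  define ej where "ej = axis j (1::real)"
  define p where "p = pd i f"
  have lin: "bounded_linear p'" using dp has_derivative_bounded_linear by blast
  obtain d1 where d1: "d1 > 0" "\<And>y. norm (y - x) < d1 \<Longrightarrow> \<bar>p y - p x - p' (y - x)\<bar> \<le> e * norm (y - x)"
    using dp[unfolded has_derivative_at_alt] e unfolding p_def real_norm_def by blast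
  obtain r where r: "r > 0" "ball x r \<subseteq> U" using U open_contains_ball by blast
  define d where "d = min (d1/2) (r/2)"
  show ?thesis
  proof (intro exI[of _ d] conjI allI impI)
    show "d > 0" using d1 r by (simp add: d_def)
    fix t :: real assume t: "t \<noteq> 0 \<and> \<bar>t\<bar> < d"
    define \<phi> where "\<phi> = (\<lambda>s. f (x + t *\<^sub>R ej + s *\<^sub>R ei) - f (x + s *\<^sub>R ei))"
    have nei: "norm ei = 1" "norm ej = 1" by (simp_all add: ei_def ej_def)
    have nrm: "norm (t *\<^sub>R ej + s *\<^sub>R ei) \<le> \<bar>t\<bar> + \<bar>s\<bar>" "norm (s *\<^sub>R ei) = \<bar>s\<bar>" for s
    proof -
      have "norm (t *\<^sub>R ej + s *\<^sub>R ei) \<le> norm (t *\<^sub>R ej) + norm (s *\<^sub>R ei)" by (rule norm_triangle_ineq)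
      then show "norm (t *\<^sub>R ej + s *\<^sub>R ei) \<le> \<bar>t\<bar> + \<bar>s\<bar>" by (simp add: ei_def ej_def)
      show "norm (s *\<^sub>R ei) = \<bar>s\<bar>" by (simp add: ei_def)
    qed
    have inU: "x + t *\<^sub>R ej + s *\<^sub>R ei \<in> U" "x + s *\<^sub>R ei \<in> U" if "\<bar>s\<bar> \<le> \<bar>t\<bar>" for s
    proof -
      have "norm (t *\<^sub>R ej + s *\<^sub>R ei) < r" using nrm(1)[of s] that t by (simp add: d_def)
      moreover have "dist x (x + (t *\<^sub>R ej + s *\<^sub>R ei)) = norm (t *\<^sub>R ej + s *\<^sub>R ei)"
        by (metis dist_norm norm_minus_commute add_diff_cancel_left')
      ultimately have "x + t *\<^sub>R ej + s *\<^sub>R ei \<in> ball x r" by (simp add: add.assoc)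
      then show "x + t *\<^sub>R ej + s *\<^sub>R ei \<in> U" using r by blast
      have "norm (s *\<^sub>R ei) < r" using nrm(2)[of s] that t r by (simp add: d_def nei)
      moreover have "dist x (x + s *\<^sub>R ei) = norm (s *\<^sub>R ei)"
        by (metis dist_norm norm_minus_commute add_diff_cancel_left')
      ultimately have "x + s *\<^sub>R ei \<in> ball x r" by simp
      then show "x + s *\<^sub>R ei \<in> U" using r by blast
    qed
    have der: "DERIV \<phi> s :> p (x + t *\<^sub>R ej + s *\<^sub>R ei) - p (x + s *\<^sub>R ei)" if "\<bar>s\<bar> \<le> \<bar>t\<bar>" for s
    proof -
      have 1: "DERIV (\<lambda>s. f (x + t *\<^sub>R ej + s *\<^sub>R ei)) s :> p (x + t *\<^sub>R ej + s *\<^sub>R ei)"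
        using line_DERIV_pd[of f "x + t *\<^sub>R ej" s i] df inU(1)[OF that] unfolding ei_def p_def by simp
      have 2: "DERIV (\<lambda>s. f (x + s *\<^sub>R ei)) s :> p (x + s *\<^sub>R ei)"
        using line_DERIV_pd[of f x s i] df inU(2)[OF that] unfolding ei_def p_def by simp
      show ?thesis unfolding \<phi>_def using DERIV_diff[OF 1 2] .
    qed
    obtain \<xi> where \<xi>: "\<bar>\<xi>\<bar> \<le> \<bar>t\<bar>" "\<phi> t - \<phi> 0 = t * (p (x + t *\<^sub>R ej + \<xi> *\<^sub>R ei) - p (x + \<xi> *\<^sub>R ei))"
    proof (cases "t > 0")
      case True
      have "\<exists>z. 0 < z \<and> z < t \<and> \<phi> t - \<phi> 0 = (t - 0) * (p (x + t *\<^sub>R ej + z *\<^sub>R ei) - p (x + z *\<^sub>R ei))"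
        by (rule MVT2[OF True]) (rule der, use True in auto)
      then obtain z where "0 < z" "z < t" "\<phi> t - \<phi> 0 = (t - 0) * (p (x + t *\<^sub>R ej + z *\<^sub>R ei) - p (x + z *\<^sub>R ei))"
        by blast
      then show ?thesis using that[of z] by auto
    next
      case False
      then have tn: "t < 0" using t by simp
      have "\<exists>z. t < z \<and> z < 0 \<and> \<phi> 0 - \<phi> t = (0 - t) * (p (x + t *\<^sub>R ej + z *\<^sub>R ei) - p (x + z *\<^sub>R ei))"
        by (rule MVT2[OF tn]) (rule der, use tn in auto)
      then obtain z where "t < z" "z < 0" "\<phi> 0 - \<phi> t = (0 - t) * (p (x + t *\<^sub>R ej + z *\<^sub>R ei) - p (x + z *\<^sub>R ei))"
        by blast
      then show ?thesis using that[of z] by (auto simp: algebra_simps)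
    qed
    have \<Delta>: "f (x + t *\<^sub>R ei + t *\<^sub>R ej) - f (x + t *\<^sub>R ei) - f (x + t *\<^sub>R ej) + f x = \<phi> t - \<phi> 0"
      unfolding \<phi>_def by (simp add: algebra_simps)
    have est1: "\<bar>p (x + t *\<^sub>R ej + \<xi> *\<^sub>R ei) - p x - p' (t *\<^sub>R ej + \<xi> *\<^sub>R ei)\<bar> \<le> e * (2 * \<bar>t\<bar>)"
    proof -
      have n: "norm (t *\<^sub>R ej + \<xi> *\<^sub>R ei) \<le> 2 * \<bar>t\<bar>" using nrm(1)[of \<xi>] \<xi>(1) by simp
      then have "norm ((x + t *\<^sub>R ej + \<xi> *\<^sub>R ei) - x) < d1" using t by (simp add: d_def add.assoc)
      then have "\<bar>p (x + t *\<^sub>R ej + \<xi> *\<^sub>R ei) - p x - p' ((x + t *\<^sub>R ej + \<xi> *\<^sub>R ei) - x)\<bar>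
          \<le> e * norm ((x + t *\<^sub>R ej + \<xi> *\<^sub>R ei) - x)" by (rule d1(2))
      also have "\<dots> \<le> e * (2 * \<bar>t\<bar>)" using n e by (simp add: add.assoc)
      finally show ?thesis by (simp add: add.assoc)
    qed
    have est2: "\<bar>p (x + \<xi> *\<^sub>R ei) - p x - p' (\<xi> *\<^sub>R ei)\<bar> \<le> e * \<bar>t\<bar>"
    proof -
      have n: "norm (\<xi> *\<^sub>R ei) \<le> \<bar>t\<bar>" using nrm(2)[of \<xi>] \<xi>(1) by (simp add: nei)
      then have "norm ((x + \<xi> *\<^sub>R ei) - x) < d1" using t by (simp add: d_def nei, linarith)
      then have "\<bar>p (x + \<xi> *\<^sub>R ei) - p x - p' ((x + \<xi> *\<^sub>R ei) - x)\<bar> \<le> e * norm ((x + \<xi> *\<^sub>R ei) - x)"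
        by (rule d1(2))
      also have "\<dots> \<le> e * \<bar>t\<bar>" using n e by (simp add: mult_left_mono)
      finally show ?thesis by simp
    qed
    have linp: "p' (t *\<^sub>R ej + \<xi> *\<^sub>R ei) = t * p' ej + p' (\<xi> *\<^sub>R ei)"
      using linear_add[OF bounded_linear.linear[OF lin]] linear_scale[OF bounded_linear.linear[OF lin]] by simp
    define D where "D = p (x + t *\<^sub>R ej + \<xi> *\<^sub>R ei) - p (x + \<xi> *\<^sub>R ei)"
    have "\<bar>D - t * p' ej\<bar> \<le> 3 * e * \<bar>t\<bar>"
      using est1 est2 linp unfolding D_def by (simp add: abs_le_iff algebra_simps)
    moreover have "(\<phi> t - \<phi> 0) / t^2 - p' ej = (D - t * p' ej) / t"
    proof -
      have "\<phi> t - \<phi> 0 = t * D" using \<xi>(2) unfolding D_def .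
      moreover have "(t * D) / t^2 = D / t" using t by (simp add: power2_eq_square)
      moreover have "(D - t * p' ej) / t = D / t - p' ej" using t by (simp add: diff_divide_distrib)
      ultimately show ?thesis by simp
    qed
    moreover have "\<bar>(D - t * p' ej) / t\<bar> = \<bar>D - t * p' ej\<bar> / \<bar>t\<bar>" by (rule abs_divide)
    moreover have "\<bar>t\<bar> > 0" using t by simp
    ultimately have "\<bar>(\<phi> t - \<phi> 0) / t^2 - p' ej\<bar> \<le> 3 * e"
      by (simp add: pos_divide_le_eq)
    then show "\<bar>(f (x + t *\<^sub>R axis i 1 + t *\<^sub>R axis j 1) - f (x + t *\<^sub>R axis i 1) - f (x + t *\<^sub>R axis j 1) + f x) / t^2
       - p' (axis j 1)\<bar> \<le> 3 * e"
      using \<Delta> unfolding ei_def ej_def by simp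
  qed
qed

lemma schwarz:
  fixes f :: "real^'n::finite \<Rightarrow> real"
  assumes U: "open U" "x \<in> U" and df: "\<And>y. y \<in> U \<Longrightarrow> f differentiable (at y)"
    and di: "pd i f differentiable (at x)" and dj: "pd j f differentiable (at x)"
  shows "pd j (pd i f) x = pd i (pd j f) x"
proof (rule ccontr)
  assume ne: "pd j (pd i f) x \<noteq> pd i (pd j f) x"
  obtain pi' where pi: "(pd i f has_derivative pi') (at x)" using di differentiable_def by blast
  obtain pj' where pj: "(pd j f has_derivative pj') (at x)" using dj differentiable_def by blast
  have 1: "pd j (pd i f) x = pi' (axis j 1)" using pd_has_derivative[OF pi] .
  have 2: "pd i (pd j f) x = pj' (axis i 1)" using pd_has_derivative[OF pj] .
  define \<delta> where "\<delta> = \<bar>pi' (axis j 1) - pj' (axis i 1)\<bar>"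
  have \<delta>: "\<delta> > 0" using ne 1 2 by (simp add: \<delta>_def)
  obtain da where da: "da > 0" "\<forall>t. t \<noteq> 0 \<and> \<bar>t\<bar> < da \<longrightarrow>
     \<bar>(f (x + t *\<^sub>R axis i 1 + t *\<^sub>R axis j 1) - f (x + t *\<^sub>R axis i 1) - f (x + t *\<^sub>R axis j 1) + f x) / t^2
       - pi' (axis j 1)\<bar> \<le> 3 * (\<delta>/7)"
    using schwarz_aux[OF U df pi, of "\<delta>/7" j] \<delta> by auto
  obtain db where db: "db > 0" "\<forall>t. t \<noteq> 0 \<and> \<bar>t\<bar> < db \<longrightarrow>
     \<bar>(f (x + t *\<^sub>R axis j 1 + t *\<^sub>R axis i 1) - f (x + t *\<^sub>R axis j 1) - f (x + t *\<^sub>R axis i 1) + f x) / t^2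
       - pj' (axis i 1)\<bar> \<le> 3 * (\<delta>/7)"
    using schwarz_aux[OF U df pj, of "\<delta>/7" i] \<delta> by auto
  define t where "t = min da db / 2"
  have t: "t \<noteq> 0 \<and> \<bar>t\<bar> < da" "t \<noteq> 0 \<and> \<bar>t\<bar> < db" using da db by (auto simp: t_def)
  define Q where "Q = (f (x + t *\<^sub>R axis i 1 + t *\<^sub>R axis j 1) - f (x + t *\<^sub>R axis i 1) - f (x + t *\<^sub>R axis j 1) + f x) / t^2"
  have sw: "x + t *\<^sub>R axis j 1 + t *\<^sub>R axis i 1 = x + t *\<^sub>R axis i 1 + t *\<^sub>R axis j 1"
    by (simp only: add.assoc add.commute[of "t *\<^sub>R axis j 1"])
  have qa: "\<bar>Q - pi' (axis j 1)\<bar> \<le> 3 * (\<delta>/7)"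
    using da(2) t(1) unfolding Q_def by blast
  have "\<bar>(f (x + t *\<^sub>R axis j 1 + t *\<^sub>R axis i 1) - f (x + t *\<^sub>R axis j 1) - f (x + t *\<^sub>R axis i 1) + f x) / t^2
       - pj' (axis i 1)\<bar> \<le> 3 * (\<delta>/7)"
    using db(2) t(2) by blast
  moreover have "(f (x + t *\<^sub>R axis j 1 + t *\<^sub>R axis i 1) - f (x + t *\<^sub>R axis j 1) - f (x + t *\<^sub>R axis i 1) + f x) = 
     (f (x + t *\<^sub>R axis i 1 + t *\<^sub>R axis j 1) - f (x + t *\<^sub>R axis i 1) - f (x + t *\<^sub>R axis j 1) + f x)"
    unfolding sw by simp
  ultimately have qb: "\<bar>Q - pj' (axis i 1)\<bar> \<le> 3 * (\<delta>/7)" unfolding Q_def by simp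
  have "\<delta> \<le> \<bar>Q - pi' (axis j 1)\<bar> + \<bar>Q - pj' (axis i 1)\<bar>" unfolding \<delta>_def by linarith
  then show False using qa qb \<delta> by linarith
qed


definition kd :: "'n \<Rightarrow> 'n \<Rightarrow> real" where "kd i j = (if i = j then 1 else 0)"

lemma sum_kd1 [simp]: "(\<Sum>r\<in>UNIV. kd r s * f r) = f (s::'n::finite)"
proof -
  have "(\<Sum>r\<in>UNIV. kd r s * f r) = (\<Sum>r\<in>UNIV. if r = s then f r else 0)" by (rule sum.cong) (auto simp: kd_def)
  then show ?thesis by simp
qed
lemma kd_sym: "kd i j = kd j i" by (auto simp: kd_def)
lemma sum_kd2 [simp]: "(\<Sum>r\<in>UNIV. kd s r * f r) = f (s::'n::finite)" using sum_kd1 by (simp add: kd_sym)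
lemma sum_kd3 [simp]: "(\<Sum>r\<in>UNIV. f r * kd r s) = f (s::'n::finite)" using sum_kd1 by (simp add: mult.commute)
lemma sum_kd4 [simp]: "(\<Sum>r\<in>UNIV. f r * kd s r) = f (s::'n::finite)" using sum_kd2 by (simp add: mult.commute)
lemma sum_kd5 [simp]: "(\<Sum>r\<in>UNIV. kd r (s::'n::finite)) = 1" using sum_kd1[of s "\<lambda>_. 1"] by simp
lemma sum_kd6 [simp]: "(\<Sum>r\<in>UNIV. kd (s::'n::finite) r) = 1" using sum_kd2[of s "\<lambda>_. 1"] by simp
lemma kd_same [simp]: "kd r r = 1" by (simp add: kd_def)

lemma kd_if1: "kd r s * x = (if r = s then x else 0)" by (simp add: kd_def)
lemma kd_if2: "x * kd r s = (if r = s then x else 0)" by (simp add: kd_def)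
lemma if0_mult1: "(if P then x else 0) * (y::real) = (if P then x * y else 0)" by simp
lemma if0_mult2: "(y::real) * (if P then x else 0) = (if P then y * x else 0)" by simp
lemma sum_if0: "(\<Sum>v\<in>A. if P then f v else (0::real)) = (if P then sum f A else 0)" by simp
lemmas kdsimps = kd_if1 kd_if2 if0_mult1 if0_mult2 sum_if0

lemma arith_KX: fixes c n N H D SA SB :: real
  shows "(-4*c^2*N + 2*c^2*N*n + 2*c*H - n*c*D - 2*c*SB) - (-2*c^2*n*N + c*n*H) + c*(2-n)*SB + c*n*SA
   + c^2*n*(2-n)*N - c*SA - c*SA - c^2*(2-n)*N = -(n-1)*(n-6)*c^2*N + (2-n)*c*(H - SA) - n*c*(D + SB)"
  by (simp add: algebra_simps power2_eq_square)

locale alg0 =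
  fixes hi h :: "'n::finite \<Rightarrow> 'n \<Rightarrow> real" and a b :: "'n \<Rightarrow> real" and c :: real
  assumes hsym: "h i j = h j i" and hisym: "hi i j = hi j i"
    and hinv: "(\<Sum>l\<in>UNIV. hi i l * h l j) = kd i j"
    and bdef: "b k = (\<Sum>l\<in>UNIV. hi k l * a l)"
begin

definition "A r \<nu> s = c * (kd r s * a \<nu> + kd r \<nu> * a s - b r * h \<nu> s)"

lemma hb: "(\<Sum>l\<in>UNIV. b l * h l j) = a j"
proof -
  have "(\<Sum>l\<in>UNIV. b l * h l j) = (\<Sum>l\<in>UNIV. \<Sum>m\<in>UNIV. hi l m * a m * h l j)"
    by (simp add: bdef sum_distrib_right)
  also have "\<dots> = (\<Sum>m\<in>UNIV. a m * (\<Sum>l\<in>UNIV. hi m l * h l j))"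
    by (subst sum.swap) (simp add: sum_distrib_left hisym mult_ac)
  also have "\<dots> = a j" by (simp add: hinv)
  finally show ?thesis .
qed

lemma hb': "(\<Sum>l\<in>UNIV. h j l * b l) = a j"
proof -
  have "(\<Sum>l\<in>UNIV. h j l * b l) = (\<Sum>l\<in>UNIV. b l * h l j)" by (rule sum.cong) (auto simp: hsym[of j] mult.commute)
  then show ?thesis using hb by simp
qed

lemma hb'': "(\<Sum>l\<in>UNIV. b l * h j l) = a j"
  using hb' by (simp add: mult.commute)

lemma compatA: "(\<Sum>l\<in>UNIV. A l k i * h l j + A l k j * h i l) = 2 * c * a k * h i j"
proof -
  have "(\<Sum>l\<in>UNIV. A l k i * h l j + A l k j * h i l) = c * (a k * h i j + a i * h k j - h k i * (\<Sum>l\<in>UNIV. b l * h l j)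
     + a k * h i j + a j * h i k - h k j * (\<Sum>l\<in>UNIV. b l * h i l))"
    unfolding A_def by (simp add: kdsimps ring_distribs sum.distrib sum_subtractf sum_distrib_left sum_distrib_right sum_negf mult_ac)
  also have "\<dots> = 2 * c * a k * h i j" unfolding hb hb'' using hsym[of i k] by (simp add: algebra_simps)
  finally show ?thesis .
qed

end

locale alg = alg0 hi h a b c
  for hi h :: "'n::finite \<Rightarrow> 'n \<Rightarrow> real" and a b :: "'n \<Rightarrow> real" and c :: real +
  fixes \<Gamma> :: "'n \<Rightarrow> 'n \<Rightarrow> 'n \<Rightarrow> real"
    and dh :: "'n \<Rightarrow> 'n \<Rightarrow> 'n \<Rightarrow> real" and da db :: "'n \<Rightarrow> 'n \<Rightarrow> real"
  assumes \<Gamma>sym: "\<Gamma> k i j = \<Gamma> k j i"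
    and dhdef: "dh \<mu> i j = (\<Sum>l\<in>UNIV. \<Gamma> l \<mu> i * h l j + \<Gamma> l \<mu> j * h i l)"
    and dbh: "(\<Sum>r\<in>UNIV. db \<mu> r * h r s + b r * dh \<mu> r s) = da \<mu> s"
begin

definition "K f = (\<Sum>s\<in>UNIV. \<Sum>\<nu>\<in>UNIV. hi s \<nu> * f s \<nu>)"
definition "N = (\<Sum>l\<in>UNIV. b l * a l)"
definition "n = real (card (UNIV :: 'n set))"

definition "pdA \<mu> r \<nu> s = (-2*c^2*a \<mu>) * (kd r s * a \<nu> + kd r \<nu> * a s - b r * h \<nu> s)
   + c * (kd r s * da \<mu> \<nu> + kd r \<nu> * da \<mu> s - (db \<mu> r * h \<nu> s + b r * dh \<mu> \<nu> s))"
definition "D = (\<Sum>r\<in>UNIV. db r r)"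
definition "H = K da"
definition "Gtr l = (\<Sum>r\<in>UNIV. \<Gamma> r r l)"
definition "gam l = K (\<lambda>s \<nu>. \<Gamma> l \<nu> s)"

lemma K_add [simp]: "K (\<lambda>s \<nu>. f s \<nu> + g s \<nu>) = K f + K g"
  unfolding K_def by (simp add: ring_distribs sum.distrib)
lemma K_diff [simp]: "K (\<lambda>s \<nu>. f s \<nu> - g s \<nu>) = K f - K g"
  unfolding K_def by (simp add: ring_distribs sum_subtractf)
lemma K_cmult [simp]: "K (\<lambda>s \<nu>. x * f s \<nu>) = x * K f"
  unfolding K_def by (simp add: sum_distrib_left mult_ac)
lemma K_sum [simp]: "K (\<lambda>s \<nu>. \<Sum>r\<in>UNIV. f r s \<nu>) = (\<Sum>r\<in>UNIV. K (f r))"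
proof -
  have "K (\<lambda>s \<nu>. \<Sum>r\<in>UNIV. f r s \<nu>) = (\<Sum>s\<in>UNIV. \<Sum>\<nu>\<in>UNIV. \<Sum>r\<in>UNIV. hi s \<nu> * f r s \<nu>)"
    unfolding K_def by (simp only: sum_distrib_left)
  also have "\<dots> = (\<Sum>s\<in>UNIV. \<Sum>r\<in>UNIV. \<Sum>\<nu>\<in>UNIV. hi s \<nu> * f r s \<nu>)"
    by (rule sum.cong[OF refl], rule sum.swap)
  also have "\<dots> = (\<Sum>r\<in>UNIV. \<Sum>s\<in>UNIV. \<Sum>\<nu>\<in>UNIV. hi s \<nu> * f r s \<nu>)"
    by (rule sum.swap)
  finally show ?thesis unfolding K_def .
qed

lemma K_swap: "K (\<lambda>s \<nu>. f \<nu> s) = K f"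
proof -
  have "K (\<lambda>s \<nu>. f \<nu> s) = (\<Sum>\<nu>\<in>UNIV. \<Sum>s\<in>UNIV. hi s \<nu> * f \<nu> s)"
    unfolding K_def by (rule sum.swap)
  also have "\<dots> = (\<Sum>\<nu>\<in>UNIV. \<Sum>s\<in>UNIV. hi \<nu> s * f \<nu> s)"
    by (intro sum.cong refl) (simp add: hisym)
  finally show ?thesis unfolding K_def .
qed

lemma hinv': "(\<Sum>s\<in>UNIV. hi s \<nu> * h l s) = kd \<nu> l"
proof -
  have "(\<Sum>s\<in>UNIV. hi s \<nu> * h l s) = (\<Sum>s\<in>UNIV. hi \<nu> s * h s l)"
    by (rule sum.cong) (simp_all add: hisym[of _ \<nu>] hsym[of l])
  then show ?thesis using hinv by simp
qed

lemma K_uv: "K (\<lambda>s \<nu>. u s * v \<nu>) = (\<Sum>s\<in>UNIV. u s * (\<Sum>\<nu>\<in>UNIV. hi s \<nu> * v \<nu>))"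
  unfolding K_def by (simp add: sum_distrib_left mult_ac)

lemma Kaa: "K (\<lambda>s \<nu>. a s * a \<nu>) = N"
  unfolding K_uv N_def bdef[symmetric] by (simp add: mult.commute)

lemma Kh: "K (\<lambda>s \<nu>. h \<nu> s) = n"
  unfolding K_def by (simp add: hinv n_def)

lemma K_lower1: "K (\<lambda>s \<nu>. \<Sum>l\<in>UNIV. F l \<nu> * h l s) = (\<Sum>l\<in>UNIV. F l l)"
proof -
  have "K (\<lambda>s \<nu>. \<Sum>l\<in>UNIV. F l \<nu> * h l s) = (\<Sum>s\<in>UNIV. \<Sum>\<nu>\<in>UNIV. \<Sum>l\<in>UNIV. hi s \<nu> * (F l \<nu> * h l s))"
    unfolding K_def by (simp only: sum_distrib_left)
  also have "\<dots> = (\<Sum>\<nu>\<in>UNIV. \<Sum>s\<in>UNIV. \<Sum>l\<in>UNIV. hi s \<nu> * (F l \<nu> * h l s))"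
    by (rule sum.swap)
  also have "\<dots> = (\<Sum>\<nu>\<in>UNIV. \<Sum>l\<in>UNIV. \<Sum>s\<in>UNIV. hi s \<nu> * (F l \<nu> * h l s))"
    by (rule sum.cong[OF refl], rule sum.swap)
  also have "\<dots> = (\<Sum>\<nu>\<in>UNIV. \<Sum>l\<in>UNIV. F l \<nu> * (\<Sum>s\<in>UNIV. hi s \<nu> * h l s))"
    by (simp add: sum_distrib_left mult_ac)
  also have "\<dots> = (\<Sum>l\<in>UNIV. F l l)" by (simp add: hinv')
  finally show ?thesis .
qed

lemma P1: "(\<Sum>r\<in>UNIV. pdA r r \<nu> s) = -2*c^2 * (a s * a \<nu>) - 2*c^2 * (a \<nu> * a s) + 2*c^2*N * h \<nu> s
   + c * (da s \<nu> + da \<nu> s - D * h \<nu> s - (\<Sum>r\<in>UNIV. b r * dh r \<nu> s))"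
  unfolding pdA_def N_def D_def
  by (simp add: kdsimps ring_distribs sum.distrib sum_subtractf sum_distrib_left sum_distrib_right sum_negf mult_ac)

lemmas nsimps = kdsimps ring_distribs sum.distrib sum_subtractf sum_distrib_left sum_distrib_right sum_negf mult_ac

lemma K_lower2: "K (\<lambda>s \<nu>. \<Sum>l\<in>UNIV. F l s * h \<nu> l) = (\<Sum>l\<in>UNIV. F l l)"
proof -
  have "K (\<lambda>s \<nu>. \<Sum>l\<in>UNIV. F l s * h \<nu> l) = K (\<lambda>s \<nu>. \<Sum>l\<in>UNIV. F l \<nu> * h s l)"
    by (rule K_swap[symmetric])
  also have "\<dots> = K (\<lambda>s \<nu>. \<Sum>l\<in>UNIV. F l \<nu> * h l s)" by (simp add: hsym[of _ "l" for l])
  also have "\<dots> = (\<Sum>l\<in>UNIV. F l l)" by (rule K_lower1)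
  finally show ?thesis .
qed

lemma Kdh: "K (\<lambda>s \<nu>. dh r \<nu> s) = 2 * Gtr r"
proof -
  have "K (\<lambda>s \<nu>. dh r \<nu> s) = K (\<lambda>s \<nu>. \<Sum>l\<in>UNIV. \<Gamma> l r \<nu> * h l s) + K (\<lambda>s \<nu>. \<Sum>l\<in>UNIV. \<Gamma> l r s * h \<nu> l)"
    unfolding dhdef by (simp add: sum.distrib)
  also have "\<dots> = (\<Sum>l\<in>UNIV. \<Gamma> l r l) + (\<Sum>l\<in>UNIV. \<Gamma> l r l)"
    using K_lower1[of "\<lambda>l \<nu>. \<Gamma> l r \<nu>"] K_lower2[of "\<lambda>l s. \<Gamma> l r s"] by simp
  also have "\<dots> = 2 * Gtr r" unfolding Gtr_def by (simp add: \<Gamma>sym[of _ r])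
  finally show ?thesis .
qed

lemma T1: "K (\<lambda>s \<nu>. \<Sum>r\<in>UNIV. pdA r r \<nu> s) = -4*c^2*N + 2*c^2*N*n + 2*c*H - n*c*D - 2*c*(\<Sum>r\<in>UNIV. b r * Gtr r)"
proof -
  have e1: "K (\<lambda>s \<nu>. a \<nu> * a s) = N" using Kaa K_swap[of "\<lambda>s \<nu>. a s * a \<nu>"] by simp
  have e2: "K (\<lambda>s \<nu>. da \<nu> s) = H" using K_swap[of da] H_def by simp
  have "K (\<lambda>s \<nu>. \<Sum>r\<in>UNIV. pdA r r \<nu> s) = -2*c^2 * K (\<lambda>s \<nu>. a s * a \<nu>) - 2*c^2 * K (\<lambda>s \<nu>. a \<nu> * a s)
     + 2*c^2*N * K (\<lambda>s \<nu>. h \<nu> s) + c * (K da + K (\<lambda>s \<nu>. da \<nu> s) - D * K (\<lambda>s \<nu>. h \<nu> s)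
     - (\<Sum>r\<in>UNIV. b r * K (\<lambda>s \<nu>. dh r \<nu> s)))"
    unfolding P1 by (simp only: K_add K_diff K_cmult K_sum)
  also have "\<dots> = -2*c^2 * N - 2*c^2 * N + 2*c^2*N * n + c * (H + H - D * n - (\<Sum>r\<in>UNIV. b r * (2 * Gtr r)))"
    unfolding Kaa e1 e2 Kh Kdh H_def by simp
  also have "\<dots> = -4*c^2*N + 2*c^2*N*n + 2*c*H - n*c*D - 2*c*(\<Sum>r\<in>UNIV. b r * Gtr r)"
    by (simp add: algebra_simps sum_distrib_left)
  finally show ?thesis .
qed

lemma P2a: "(\<Sum>r\<in>UNIV. pdA \<nu> r r s) = -2*c^2*a \<nu> * (a s + n * a s - (\<Sum>r\<in>UNIV. b r * h r s))
   + c * (da \<nu> s + n * da \<nu> s - (\<Sum>r\<in>UNIV. db \<nu> r * h r s + b r * dh \<nu> r s))"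
  unfolding pdA_def n_def by (simp add: nsimps)

lemma P2: "(\<Sum>r\<in>UNIV. pdA \<nu> r r s) = (-2*c^2*n) * (a \<nu> * a s) + (c * n) * da \<nu> s"
  unfolding P2a hb dbh by (simp add: algebra_simps)

lemma T2: "K (\<lambda>s \<nu>. \<Sum>r\<in>UNIV. pdA \<nu> r r s) = -2*c^2*n*N + c*n*H"
proof -
  have e1: "K (\<lambda>s \<nu>. a \<nu> * a s) = N" using Kaa K_swap[of "\<lambda>s \<nu>. a s * a \<nu>"] by simp
  have e2: "K (\<lambda>s \<nu>. da \<nu> s) = H" using K_swap[of da] H_def by simp
  have "K (\<lambda>s \<nu>. \<Sum>r\<in>UNIV. pdA \<nu> r r s) = (-2*c^2*n) * K (\<lambda>s \<nu>. a \<nu> * a s) + (c * n) * K (\<lambda>s \<nu>. da \<nu> s)"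
    unfolding P2 by (simp only: K_add K_cmult)
  then show ?thesis unfolding e1 e2 by simp
qed

lemma KA: "K (\<lambda>s \<nu>. A l \<nu> s) = c * (2 - n) * b l"
proof -
  have e1: "K (\<lambda>s \<nu>. kd l s * a \<nu>) = b l" unfolding K_def bdef by (simp add: kdsimps)
  have e2: "K (\<lambda>s \<nu>. kd l \<nu> * a s) = b l" unfolding K_def bdef by (simp add: kdsimps hisym[of _ l])
  have "K (\<lambda>s \<nu>. A l \<nu> s) = c * (K (\<lambda>s \<nu>. kd l s * a \<nu>) + K (\<lambda>s \<nu>. kd l \<nu> * a s) - b l * K (\<lambda>s \<nu>. h \<nu> s))"
    unfolding A_def by (simp only: K_add K_diff K_cmult)
  then show ?thesis unfolding e1 e2 Kh by (simp add: algebra_simps)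
qed

lemma T3: "K (\<lambda>s \<nu>. \<Sum>r\<in>UNIV. \<Sum>l\<in>UNIV. \<Gamma> r r l * A l \<nu> s) = c * (2 - n) * (\<Sum>l\<in>UNIV. Gtr l * b l)"
proof -
  have "K (\<lambda>s \<nu>. \<Sum>r\<in>UNIV. \<Sum>l\<in>UNIV. \<Gamma> r r l * A l \<nu> s) = (\<Sum>r\<in>UNIV. \<Sum>l\<in>UNIV. \<Gamma> r r l * K (\<lambda>s \<nu>. A l \<nu> s))"
    by (simp only: K_sum K_cmult)
  also have "\<dots> = (\<Sum>r\<in>UNIV. \<Sum>l\<in>UNIV. \<Gamma> r r l * (c * (2 - n) * b l))" unfolding KA ..
  also have "\<dots> = c * (2 - n) * (\<Sum>l\<in>UNIV. Gtr l * b l)"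
    unfolding Gtr_def by (subst sum.swap) (simp add: sum_distrib_left sum_distrib_right mult_ac)
  finally show ?thesis .
qed

lemma AtrA: "(\<Sum>r\<in>UNIV. A r r l) = c * n * a l"
proof -
  have "(\<Sum>r\<in>UNIV. A r r l) = c * (a l + n * a l - (\<Sum>r\<in>UNIV. b r * h r l))"
    unfolding A_def n_def by (simp add: nsimps)
  then show ?thesis unfolding hb by (simp add: algebra_simps)
qed

lemma T4: "K (\<lambda>s \<nu>. \<Sum>r\<in>UNIV. \<Sum>l\<in>UNIV. A r r l * \<Gamma> l \<nu> s) = c * n * (\<Sum>l\<in>UNIV. a l * gam l)"
proof -
  have "K (\<lambda>s \<nu>. \<Sum>r\<in>UNIV. \<Sum>l\<in>UNIV. A r r l * \<Gamma> l \<nu> s) = (\<Sum>r\<in>UNIV. \<Sum>l\<in>UNIV. A r r l * gam l)"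
    unfolding gam_def by (simp only: K_sum K_cmult)
  also have "\<dots> = (\<Sum>l\<in>UNIV. (\<Sum>r\<in>UNIV. A r r l) * gam l)"
    by (subst sum.swap) (simp add: sum_distrib_right)
  also have "\<dots> = c * n * (\<Sum>l\<in>UNIV. a l * gam l)" unfolding AtrA by (simp add: sum_distrib_left mult_ac)
  finally show ?thesis .
qed

lemma T5: "K (\<lambda>s \<nu>. \<Sum>r\<in>UNIV. \<Sum>l\<in>UNIV. A r r l * A l \<nu> s) = c^2 * n * (2 - n) * N"
proof -
  have "K (\<lambda>s \<nu>. \<Sum>r\<in>UNIV. \<Sum>l\<in>UNIV. A r r l * A l \<nu> s) = (\<Sum>r\<in>UNIV. \<Sum>l\<in>UNIV. A r r l * K (\<lambda>s \<nu>. A l \<nu> s))"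
    by (simp only: K_sum K_cmult)
  also have "\<dots> = (\<Sum>l\<in>UNIV. (\<Sum>r\<in>UNIV. A r r l) * (c * (2 - n) * b l))"
    unfolding KA by (subst sum.swap) (simp add: sum_distrib_right)
  also have "\<dots> = c^2 * n * (2 - n) * N" unfolding AtrA N_def
    by (simp add: sum_distrib_left power2_eq_square mult_ac)
  finally show ?thesis .
qed

lemma K_av: "K (\<lambda>s \<nu>. a s * v \<nu>) = (\<Sum>\<nu>\<in>UNIV. b \<nu> * v \<nu>)"
proof -
  have "K (\<lambda>s \<nu>. a s * v \<nu>) = (\<Sum>\<nu>\<in>UNIV. v \<nu> * (\<Sum>s\<in>UNIV. hi \<nu> s * a s))"
    unfolding K_def by (subst sum.swap) (simp add: sum_distrib_left hisym[of _ \<nu> for \<nu>] mult_ac)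
  then show ?thesis unfolding bdef[symmetric] by (simp add: mult.commute)
qed

lemma K_va: "K (\<lambda>s \<nu>. v s * a \<nu>) = (\<Sum>s\<in>UNIV. v s * b s)"
  unfolding K_uv bdef[symmetric] ..

lemma K_av2: "K (\<lambda>s \<nu>. a \<nu> * v s) = (\<Sum>s\<in>UNIV. v s * b s)"
  using K_swap[of "\<lambda>s \<nu>. a s * v \<nu>"] K_av[of v] by (simp add: mult.commute)

lemma P6a: "(\<Sum>r\<in>UNIV. \<Sum>l\<in>UNIV. \<Gamma> r \<nu> l * A l r s) = c * ((\<Sum>r\<in>UNIV. a r * \<Gamma> r \<nu> s) + a s * (\<Sum>r\<in>UNIV. \<Gamma> r \<nu> r)
   - (\<Sum>r\<in>UNIV. (\<Sum>l\<in>UNIV. \<Gamma> r \<nu> l * b l) * h r s))"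
  unfolding A_def by (simp add: nsimps)

lemma T6: "K (\<lambda>s \<nu>. \<Sum>r\<in>UNIV. \<Sum>l\<in>UNIV. \<Gamma> r \<nu> l * A l r s) = c * (\<Sum>l\<in>UNIV. a l * gam l)"
proof -
  have "K (\<lambda>s \<nu>. \<Sum>r\<in>UNIV. \<Sum>l\<in>UNIV. \<Gamma> r \<nu> l * A l r s) = c * ((\<Sum>r\<in>UNIV. a r * K (\<lambda>s \<nu>. \<Gamma> r \<nu> s))
     + K (\<lambda>s \<nu>. a s * (\<Sum>r\<in>UNIV. \<Gamma> r \<nu> r)) - K (\<lambda>s \<nu>. \<Sum>r\<in>UNIV. (\<Sum>l\<in>UNIV. \<Gamma> r \<nu> l * b l) * h r s))"
    unfolding P6a by (simp only: K_add K_diff K_cmult K_sum)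
  also have "\<dots> = c * ((\<Sum>r\<in>UNIV. a r * gam r) + (\<Sum>\<nu>\<in>UNIV. b \<nu> * (\<Sum>r\<in>UNIV. \<Gamma> r \<nu> r))
     - (\<Sum>r\<in>UNIV. \<Sum>l\<in>UNIV. \<Gamma> r r l * b l))"
    unfolding gam_def K_av K_lower1 ..
  also have "(\<Sum>\<nu>\<in>UNIV. b \<nu> * (\<Sum>r\<in>UNIV. \<Gamma> r \<nu> r)) = (\<Sum>r\<in>UNIV. \<Sum>l\<in>UNIV. \<Gamma> r r l * b l)"
  proof -
    have "(\<Sum>\<nu>\<in>UNIV. b \<nu> * (\<Sum>r\<in>UNIV. \<Gamma> r \<nu> r)) = (\<Sum>\<nu>\<in>UNIV. \<Sum>r\<in>UNIV. \<Gamma> r r \<nu> * b \<nu>)"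
      unfolding sum_distrib_left by (intro sum.cong refl) (metis \<Gamma>sym mult.commute)
    also have "\<dots> = (\<Sum>r\<in>UNIV. \<Sum>l\<in>UNIV. \<Gamma> r r l * b l)" by (rule sum.swap)
    finally show ?thesis .
  qed
  finally show ?thesis by simp
qed

lemma P7a: "(\<Sum>r\<in>UNIV. \<Sum>l\<in>UNIV. A r \<nu> l * \<Gamma> l r s) = c * (a \<nu> * (\<Sum>r\<in>UNIV. \<Gamma> r r s) + (\<Sum>l\<in>UNIV. a l * \<Gamma> l \<nu> s)
   - (\<Sum>r\<in>UNIV. \<Sum>l\<in>UNIV. b r * \<Gamma> l r s * h \<nu> l))"
  unfolding A_def by (simp add: nsimps)

lemma T7: "K (\<lambda>s \<nu>. \<Sum>r\<in>UNIV. \<Sum>l\<in>UNIV. A r \<nu> l * \<Gamma> l r s) = c * (\<Sum>l\<in>UNIV. a l * gam l)"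
proof -
  have sw: "(\<lambda>s \<nu>. \<Sum>r\<in>UNIV. \<Sum>l\<in>UNIV. b r * \<Gamma> l r s * h \<nu> l) = (\<lambda>s \<nu>. \<Sum>l\<in>UNIV. (\<Sum>r\<in>UNIV. b r * \<Gamma> l r s) * h \<nu> l)"
    by (intro ext, subst sum.swap) (simp add: sum_distrib_right)
  have "K (\<lambda>s \<nu>. \<Sum>r\<in>UNIV. \<Sum>l\<in>UNIV. A r \<nu> l * \<Gamma> l r s) = c * (K (\<lambda>s \<nu>. a \<nu> * (\<Sum>r\<in>UNIV. \<Gamma> r r s))
     + (\<Sum>l\<in>UNIV. a l * K (\<lambda>s \<nu>. \<Gamma> l \<nu> s)) - K (\<lambda>s \<nu>. \<Sum>r\<in>UNIV. \<Sum>l\<in>UNIV. b r * \<Gamma> l r s * h \<nu> l))"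
    unfolding P7a by (simp only: K_add K_diff K_cmult K_sum)
  also have "\<dots> = c * ((\<Sum>s\<in>UNIV. (\<Sum>r\<in>UNIV. \<Gamma> r r s) * b s) + (\<Sum>l\<in>UNIV. a l * gam l)
     - (\<Sum>l\<in>UNIV. \<Sum>r\<in>UNIV. b r * \<Gamma> l r l))"
    unfolding gam_def K_av2 sw K_lower2 ..
  also have "(\<Sum>l\<in>UNIV. \<Sum>r\<in>UNIV. b r * \<Gamma> l r l) = (\<Sum>s\<in>UNIV. (\<Sum>r\<in>UNIV. \<Gamma> r r s) * b s)"
  proof -
    have "(\<Sum>l\<in>UNIV. \<Sum>r\<in>UNIV. b r * \<Gamma> l r l) = (\<Sum>l\<in>UNIV. \<Sum>r\<in>UNIV. \<Gamma> l l r * b r)"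
      by (intro sum.cong refl) (metis \<Gamma>sym mult.commute)
    also have "\<dots> = (\<Sum>r\<in>UNIV. \<Sum>l\<in>UNIV. \<Gamma> l l r * b r)" by (rule sum.swap)
    also have "\<dots> = (\<Sum>s\<in>UNIV. (\<Sum>r\<in>UNIV. \<Gamma> r r s) * b s)" by (simp add: sum_distrib_right)
    finally show ?thesis .
  qed
  finally show ?thesis by simp
qed

lemma P8a: "(\<Sum>r\<in>UNIV. \<Sum>l\<in>UNIV. A r \<nu> l * A l r s) = c^2 * (a \<nu> * a s + n * (a \<nu> * a s) - a \<nu> * (\<Sum>r\<in>UNIV. b r * h r s)
   + a s * a \<nu> + a \<nu> * a s - (\<Sum>l\<in>UNIV. a l * b l) * h \<nu> s - (\<Sum>r\<in>UNIV. b r * a r) * h \<nu> s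
   - a s * (\<Sum>r\<in>UNIV. b r * h \<nu> r) + (\<Sum>r\<in>UNIV. \<Sum>l\<in>UNIV. b r * h \<nu> l * b l * h r s))"
  unfolding A_def n_def by (simp add: nsimps power2_eq_square)

lemma T8: "K (\<lambda>s \<nu>. \<Sum>r\<in>UNIV. \<Sum>l\<in>UNIV. A r \<nu> l * A l r s) = c^2 * (2 - n) * N"
proof -
  have e9: "(\<Sum>r\<in>UNIV. \<Sum>l\<in>UNIV. b r * h \<nu> l * b l * h r s) = a \<nu> * a s" for \<nu> s
  proof -
    have "(\<Sum>r\<in>UNIV. \<Sum>l\<in>UNIV. b r * h \<nu> l * b l * h r s) = (\<Sum>r\<in>UNIV. b r * h r s) * (\<Sum>l\<in>UNIV. h \<nu> l * b l)"
      unfolding sum_product by (simp add: mult_ac)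
    then show ?thesis unfolding hb hb' by simp
  qed
  have e: "(\<Sum>r\<in>UNIV. \<Sum>l\<in>UNIV. A r \<nu> l * A l r s) = (c^2 * (n + 2)) * (a s * a \<nu>) - (2 * c^2 * N) * h \<nu> s" for \<nu> s
    unfolding P8a hb hb' hb'' e9 N_def by (simp add: algebra_simps)
  have "K (\<lambda>s \<nu>. \<Sum>r\<in>UNIV. \<Sum>l\<in>UNIV. A r \<nu> l * A l r s) = (c^2 * (n + 2)) * K (\<lambda>s \<nu>. a s * a \<nu>) - (2 * c^2 * N) * K (\<lambda>s \<nu>. h \<nu> s)"
    unfolding e by (simp only: K_diff K_cmult)
  then show ?thesis unfolding Kaa Kh by (simp add: algebra_simps)
qed

definition "X s \<nu> = (\<Sum>r\<in>UNIV. pdA r r \<nu> s - pdA \<nu> r r s + (\<Sum>l\<in>UNIV. \<Gamma> r r l * A l \<nu> s + A r r l * \<Gamma> l \<nu> s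
   + A r r l * A l \<nu> s - \<Gamma> r \<nu> l * A l r s - A r \<nu> l * \<Gamma> l r s - A r \<nu> l * A l r s))"

lemma KX: "K X = -(n-1)*(n-6)*c^2*N + (2-n)*c*(H - (\<Sum>l\<in>UNIV. a l * gam l)) - n*c*(D + (\<Sum>l\<in>UNIV. b l * Gtr l))"
proof -
  have "X = (\<lambda>s \<nu>. (\<Sum>r\<in>UNIV. pdA r r \<nu> s) - (\<Sum>r\<in>UNIV. pdA \<nu> r r s) + (\<Sum>r\<in>UNIV. \<Sum>l\<in>UNIV. \<Gamma> r r l * A l \<nu> s)
     + (\<Sum>r\<in>UNIV. \<Sum>l\<in>UNIV. A r r l * \<Gamma> l \<nu> s) + (\<Sum>r\<in>UNIV. \<Sum>l\<in>UNIV. A r r l * A l \<nu> s)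
     - (\<Sum>r\<in>UNIV. \<Sum>l\<in>UNIV. \<Gamma> r \<nu> l * A l r s) - (\<Sum>r\<in>UNIV. \<Sum>l\<in>UNIV. A r \<nu> l * \<Gamma> l r s)
     - (\<Sum>r\<in>UNIV. \<Sum>l\<in>UNIV. A r \<nu> l * A l r s))"
    unfolding X_def by (intro ext) (simp only: sum.distrib sum_subtractf)
  then have "K X = K (\<lambda>s \<nu>. \<Sum>r\<in>UNIV. pdA r r \<nu> s) - K (\<lambda>s \<nu>. \<Sum>r\<in>UNIV. pdA \<nu> r r s) + K (\<lambda>s \<nu>. \<Sum>r\<in>UNIV. \<Sum>l\<in>UNIV. \<Gamma> r r l * A l \<nu> s)
     + K (\<lambda>s \<nu>. \<Sum>r\<in>UNIV. \<Sum>l\<in>UNIV. A r r l * \<Gamma> l \<nu> s) + K (\<lambda>s \<nu>. \<Sum>r\<in>UNIV. \<Sum>l\<in>UNIV. A r r l * A l \<nu> s)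
     - K (\<lambda>s \<nu>. \<Sum>r\<in>UNIV. \<Sum>l\<in>UNIV. \<Gamma> r \<nu> l * A l r s) - K (\<lambda>s \<nu>. \<Sum>r\<in>UNIV. \<Sum>l\<in>UNIV. A r \<nu> l * \<Gamma> l r s)
     - K (\<lambda>s \<nu>. \<Sum>r\<in>UNIV. \<Sum>l\<in>UNIV. A r \<nu> l * A l r s)"
    by (simp only: K_add K_diff)
  also have "\<dots> = (-4*c^2*N + 2*c^2*N*n + 2*c*H - n*c*D - 2*c*(\<Sum>r\<in>UNIV. b r * Gtr r))
     - (-2*c^2*n*N + c*n*H) + c * (2 - n) * (\<Sum>l\<in>UNIV. Gtr l * b l) + c * n * (\<Sum>l\<in>UNIV. a l * gam l)
     + c^2 * n * (2 - n) * N - c * (\<Sum>l\<in>UNIV. a l * gam l) - c * (\<Sum>l\<in>UNIV. a l * gam l) - c^2 * (2 - n) * N"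
    unfolding T1 T2 T3 T4 T5 T6 T7 T8 ..
  also have "\<dots> = -(n-1)*(n-6)*c^2*N + (2-n)*c*(H - (\<Sum>l\<in>UNIV. a l * gam l)) - n*c*(D + (\<Sum>l\<in>UNIV. b l * Gtr l))"
  proof -
    have e: "(\<Sum>l\<in>UNIV. Gtr l * b l) = (\<Sum>l\<in>UNIV. b l * Gtr l)" by (simp add: mult.commute)
    show ?thesis unfolding e by (rule arith_KX)
  qed
  finally show ?thesis .
qed

end

lemma christ_compat:
  fixes M :: "real^'n::finite \<Rightarrow> real^'n^'n" and C :: "'n \<Rightarrow> 'n \<Rightarrow> 'n \<Rightarrow> real"
  assumes sym: "\<And>i j. M y $ i $ j = M y $ j $ i"
    and inv: "\<And>k j. (\<Sum>l\<in>UNIV. ginv M y $ k $ l * M y $ l $ j) = kd k j"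
    and Csym: "\<And>k i j. C k i j = C k j i"
    and dM: "\<And>k i j. pd k (\<lambda>z. M z $ i $ j) y = (\<Sum>l\<in>UNIV. C l k i * M y $ l $ j + C l k j * M y $ i $ l)"
  shows "christ M y k i j = C k i j"
proof -
  have e: "pd i (\<lambda>z. M z $ j $ l) y + pd j (\<lambda>z. M z $ i $ l) y - pd l (\<lambda>z. M z $ i $ j) y
      = 2 * (\<Sum>p\<in>UNIV. C p i j * M y $ p $ l)" for l
  proof -
    have "pd i (\<lambda>z. M z $ j $ l) y + pd j (\<lambda>z. M z $ i $ l) y - pd l (\<lambda>z. M z $ i $ j) y
      = (\<Sum>p\<in>UNIV. (C p i j * M y $ p $ l + C p i l * M y $ j $ p) + (C p j i * M y $ p $ l + C p j l * M y $ i $ p)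
           - (C p l i * M y $ p $ j + C p l j * M y $ i $ p))"
      unfolding dM by (simp only: sum.distrib sum_subtractf)
    also have "\<dots> = (\<Sum>p\<in>UNIV. 2 * (C p i j * M y $ p $ l))"
    proof (rule sum.cong[OF refl])
      fix p
      have "C p j i = C p i j" "C p l i = C p i l" "C p l j = C p j l" "M y $ p $ j = M y $ j $ p"
        using Csym sym by auto
      then show "(C p i j * M y $ p $ l + C p i l * M y $ j $ p) + (C p j i * M y $ p $ l + C p j l * M y $ i $ p)
           - (C p l i * M y $ p $ j + C p l j * M y $ i $ p) = 2 * (C p i j * M y $ p $ l)"
        by (simp add: algebra_simps)
    qed
    finally show ?thesis by (simp add: sum_distrib_left)
  qed
  have "christ M y k i j = (\<Sum>l\<in>UNIV. ginv M y $ k $ l * (\<Sum>p\<in>UNIV. C p i j * M y $ p $ l))"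
    unfolding christ_def e by (simp add: sum_distrib_left)
  also have "\<dots> = (\<Sum>p\<in>UNIV. C p i j * (\<Sum>l\<in>UNIV. ginv M y $ k $ l * M y $ l $ p))"
  proof -
    have "(\<Sum>l\<in>UNIV. ginv M y $ k $ l * (\<Sum>p\<in>UNIV. C p i j * M y $ p $ l))
        = (\<Sum>l\<in>UNIV. \<Sum>p\<in>UNIV. C p i j * (ginv M y $ k $ l * M y $ l $ p))"
      by (simp add: sum_distrib_left sym mult_ac)
    also have "\<dots> = (\<Sum>p\<in>UNIV. \<Sum>l\<in>UNIV. C p i j * (ginv M y $ k $ l * M y $ l $ p))" by (rule sum.swap)
    finally show ?thesis by (simp add: sum_distrib_left)
  qed
  also have "\<dots> = C k i j" unfolding inv by (simp add: kd_sym[of k])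
  finally show ?thesis .
qed


locale setting =
  fixes U :: "(real^'n::finite) set" and F G :: "real^'n \<Rightarrow> real^'n^'n"
    and V :: "real^'n \<Rightarrow> real^'n" and \<alpha> :: "real^'n \<Rightarrow> real"
  assumes U: "open U" and pkn: "para_kaehler_norden U F G" and up: "unit_parallel U G V"
    and sa: "smooth_on U \<alpha>" and apos: "\<forall>x\<in>U. \<alpha> x > 0"
    and Wa: "\<forall>x\<in>U. (\<Sum>i\<in>UNIV. (F x *v V x) $ i * pd i \<alpha> x) = 0"
begin

definition "W z i = (\<Sum>j\<in>UNIV. F z $ i $ j * V z $ j)"
definition "w z i = (\<Sum>j\<in>UNIV. G z $ i $ j * W z j)"
definition "h z i j = G z $ i $ j + w z i * w z j"
definition "hi z i j = ginv G z $ i $ j - (1/2) * W z i * W z j"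
definition "a z i = pd i \<alpha> z"
definition "b z k = gradc G \<alpha> z k"
definition "Aw z k i j = (1/(2 * \<alpha> z)) * (kd k j * a z i + kd k i * a z j - b z k * h z i j)"
abbreviation "Gt \<equiv> deformed_metric G F V \<alpha>"

lemma rm: "riemannian_metric_on U G" using pkn unfolding para_kaehler_norden_def by blast

lemma Gsym: "y \<in> U \<Longrightarrow> G y $ i $ j = G y $ j $ i"
proof -
  assume "y \<in> U"
  then have "transpose (G y) = G y" using rm unfolding riemannian_metric_on_def by blast
  then have "transpose (G y) $ i $ j = G y $ i $ j" by simp
  then show ?thesis unfolding transpose_def by simp
qed

lemma Ginv: "y \<in> U \<Longrightarrow> invertible (G y)"
  using rm posdef_invertible unfolding riemannian_metric_on_def by blast

lemma gi_G: "y \<in> U \<Longrightarrow> (\<Sum>l\<in>UNIV. ginv G y $ i $ l * G y $ l $ j) = kd i j"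
proof -
  assume "y \<in> U"
  then have "(matrix_inv (G y) ** G y) $ i $ j = mat 1 $ i $ j" using minv_props(2)[OF Ginv] by simp
  then show ?thesis unfolding ginv_def by (simp add: matrix_matrix_mult_def mat_def kd_def)
qed

lemma G_gi: "y \<in> U \<Longrightarrow> (\<Sum>l\<in>UNIV. G y $ i $ l * ginv G y $ l $ j) = kd i j"
proof -
  assume "y \<in> U"
  then have "(G y ** matrix_inv (G y)) $ i $ j = mat 1 $ i $ j" using minv_props(1)[OF Ginv] by simp
  then show ?thesis unfolding ginv_def by (simp add: matrix_matrix_mult_def mat_def kd_def)
qed

lemma gisym: "y \<in> U \<Longrightarrow> ginv G y $ i $ j = ginv G y $ j $ i"
proof -
  assume y: "y \<in> U"
  have "transpose (G y) = G y" using rm y unfolding riemannian_metric_on_def by blast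
  then have "transpose (matrix_inv (G y)) = matrix_inv (G y)" using minv_sym Ginv[OF y] by blast
  then have "transpose (matrix_inv (G y)) $ i $ j = matrix_inv (G y) $ i $ j" by simp
  then show ?thesis unfolding ginv_def transpose_def by simp
qed

lemma smG: "smooth_on U (\<lambda>y. G y $ i $ j)" using rm unfolding riemannian_metric_on_def by blast
lemma smF: "smooth_on U (\<lambda>y. F y $ i $ j)" using pkn unfolding para_kaehler_norden_def by blast
lemma smV: "smooth_on U (\<lambda>y. V y $ i)" using up unfolding unit_parallel_def by blast

lemma dG: "y \<in> U \<Longrightarrow> (\<lambda>z. G z $ i $ j) differentiable (at y)" using smooth_diff[OF smG U] .
lemma dF: "y \<in> U \<Longrightarrow> (\<lambda>z. F z $ i $ j) differentiable (at y)" using smooth_diff[OF smF U] .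
lemma dV: "y \<in> U \<Longrightarrow> (\<lambda>z. V z $ i) differentiable (at y)" using smooth_diff[OF smV U] .
lemma d\<alpha>: "y \<in> U \<Longrightarrow> \<alpha> differentiable (at y)" using smooth_diff[OF sa U] .
lemma dpdG: "y \<in> U \<Longrightarrow> pd k (\<lambda>z. G z $ i $ j) differentiable (at y)" using smooth_diff_pd[OF smG U] .
lemma dpdF: "y \<in> U \<Longrightarrow> pd k (\<lambda>z. F z $ i $ j) differentiable (at y)" using smooth_diff_pd[OF smF U] .
lemma dpdV: "y \<in> U \<Longrightarrow> pd k (\<lambda>z. V z $ i) differentiable (at y)" using smooth_diff_pd[OF smV U] .
lemma da: "y \<in> U \<Longrightarrow> (\<lambda>z. a z i) differentiable (at y)" unfolding a_def using smooth_diff_pd[OF sa U] by simp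

lemma dgi: "y \<in> U \<Longrightarrow> (\<lambda>z. ginv G z $ k $ l) differentiable (at y)"
  using ginv_differentiable[OF U _ _ dG] Ginv by blast

lemma dchrist: "y \<in> U \<Longrightarrow> (\<lambda>z. christ G z k i j) differentiable (at y)"
  unfolding christ_def
  by (intro differentiable_mult differentiable_sum differentiable_add differentiable_diff
      differentiable_const dgi dpdG ballI) simp_all

lemma dW: "y \<in> U \<Longrightarrow> (\<lambda>z. W z i) differentiable (at y)"
  unfolding W_def by (intro differentiable_mult differentiable_sum dF dV ballI) simp_all

lemma dw: "y \<in> U \<Longrightarrow> (\<lambda>z. w z i) differentiable (at y)"
  unfolding w_def by (intro differentiable_mult differentiable_sum dG dW ballI) simp_all

lemma dh: "y \<in> U \<Longrightarrow> (\<lambda>z. h z i j) differentiable (at y)"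
  unfolding h_def by (intro differentiable_mult differentiable_add dG dw)

lemma db: "y \<in> U \<Longrightarrow> (\<lambda>z. b z k) differentiable (at y)"
  unfolding b_def gradc_def a_def[symmetric]
  by (intro differentiable_mult differentiable_sum dgi da ballI) simp_all

lemma dc: "y \<in> U \<Longrightarrow> (\<lambda>z. 1 / (2 * \<alpha> z)) differentiable (at y)"
  using apos by (intro differentiable_divide differentiable_mult differentiable_const d\<alpha>) auto

lemma dAw: "y \<in> U \<Longrightarrow> (\<lambda>z. Aw z k i j) differentiable (at y)"
  unfolding Aw_def
  by (intro differentiable_mult differentiable_add differentiable_diff differentiable_const dc da db dh)

lemma pdGsym: "y \<in> U \<Longrightarrow> pd k (\<lambda>z. G z $ i $ j) y = pd k (\<lambda>z. G z $ j $ i) y"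
  using pd_cong[OF U, of y "\<lambda>z. G z $ i $ j" "\<lambda>z. G z $ j $ i"] Gsym by blast

lemma Gsum_sym: "y \<in> U \<Longrightarrow> (\<Sum>l\<in>UNIV. ginv G y $ l $ m * G y $ l $ j) = kd j m"
proof -
  assume y: "y \<in> U"
  have "(\<Sum>l\<in>UNIV. ginv G y $ l $ m * G y $ l $ j) = (\<Sum>l\<in>UNIV. G y $ j $ l * ginv G y $ l $ m)"
    by (rule sum.cong[OF refl]) (simp add: Gsym[OF y, of _ j] mult.commute)
  then show ?thesis using G_gi[OF y] by simp
qed

lemma christ_lower: "y \<in> U \<Longrightarrow> (\<Sum>l\<in>UNIV. christ G y l k i * G y $ l $ j)
   = (1/2) * (pd k (\<lambda>z. G z $ i $ j) y + pd i (\<lambda>z. G z $ k $ j) y - pd j (\<lambda>z. G z $ k $ i) y)"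
proof -
  assume y: "y \<in> U"
  define S where "S m = pd k (\<lambda>z. G z $ i $ m) y + pd i (\<lambda>z. G z $ k $ m) y - pd m (\<lambda>z. G z $ k $ i) y" for m
  have "(\<Sum>l\<in>UNIV. christ G y l k i * G y $ l $ j) = (1/2) * (\<Sum>l\<in>UNIV. \<Sum>m\<in>UNIV. S m * (ginv G y $ l $ m * G y $ l $ j))"
    unfolding christ_def S_def[symmetric] by (simp add: sum_distrib_left sum_distrib_right mult_ac)
  also have "\<dots> = (1/2) * (\<Sum>m\<in>UNIV. S m * (\<Sum>l\<in>UNIV. ginv G y $ l $ m * G y $ l $ j))"
    by (subst sum.swap) (simp add: sum_distrib_left)
  also have "\<dots> = (1/2) * S j" unfolding Gsum_sym[OF y] by (simp add: kd_sym[of j])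
  finally show ?thesis unfolding S_def .
qed

lemma D1: "y \<in> U \<Longrightarrow> pd k (\<lambda>z. G z $ i $ j) y = (\<Sum>l\<in>UNIV. christ G y l k i * G y $ l $ j + christ G y l k j * G y $ i $ l)"
proof -
  assume y: "y \<in> U"
  have "(\<Sum>l\<in>UNIV. christ G y l k j * G y $ i $ l) = (\<Sum>l\<in>UNIV. christ G y l k j * G y $ l $ i)"
    by (rule sum.cong[OF refl]) (simp add: Gsym[OF y, of i])
  then have "(\<Sum>l\<in>UNIV. christ G y l k i * G y $ l $ j + christ G y l k j * G y $ i $ l)
     = (1/2) * (pd k (\<lambda>z. G z $ i $ j) y + pd i (\<lambda>z. G z $ k $ j) y - pd j (\<lambda>z. G z $ k $ i) y)
     + (1/2) * (pd k (\<lambda>z. G z $ j $ i) y + pd j (\<lambda>z. G z $ k $ i) y - pd i (\<lambda>z. G z $ k $ j) y)"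
    by (simp add: sum.distrib christ_lower[OF y])
  then show ?thesis using pdGsym[OF y, of k j i] by (simp add: field_simps)
qed

lemma christ_sym: "y \<in> U \<Longrightarrow> christ G y k i j = christ G y k j i"
  unfolding christ_def using pdGsym by (simp add: add.commute)

lemma F_parallel: "y \<in> U \<Longrightarrow> pd k (\<lambda>z. F z $ i $ j) y = - (\<Sum>l\<in>UNIV. christ G y i k l * F y $ l $ j - christ G y l k j * F y $ i $ l)"
proof -
  assume "y \<in> U"
  then have "nablaF G F y k i j = 0" using pkn unfolding para_kaehler_norden_def by blast
  then show ?thesis unfolding nablaF_def by linarith
qed

lemma V_parallel: "y \<in> U \<Longrightarrow> pd k (\<lambda>z. V z $ j) y = - (\<Sum>l\<in>UNIV. christ G y j k l * V y $ l)"
proof -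
  assume "y \<in> U"
  then have "pd k (\<lambda>y. V y $ j) y + (\<Sum>l\<in>UNIV. christ G y j k l * V y $ l) = 0"
    using up unfolding unit_parallel_def by blast
  then show ?thesis by linarith
qed

lemma D2: "y \<in> U \<Longrightarrow> pd k (\<lambda>z. W z i) y = - (\<Sum>l\<in>UNIV. christ G y i k l * W y l)"
proof -
  assume y: "y \<in> U"
  have "pd k (\<lambda>z. W z i) y = (\<Sum>j\<in>UNIV. pd k (\<lambda>z. F z $ i $ j * V z $ j) y)"
    unfolding W_def by (rule pd_sum) (auto intro!: differentiable_mult dF dV y)
  also have "\<dots> = (\<Sum>j\<in>UNIV. F y $ i $ j * pd k (\<lambda>z. V z $ j) y + pd k (\<lambda>z. F z $ i $ j) y * V y $ j)"
    by (rule sum.cong[OF refl]) (rule pd_mult[OF dF[OF y] dV[OF y]])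
  also have "\<dots> = - (\<Sum>j\<in>UNIV. \<Sum>l\<in>UNIV. F y $ i $ j * christ G y j k l * V y $ l)
      - (\<Sum>j\<in>UNIV. \<Sum>l\<in>UNIV. christ G y i k l * F y $ l $ j * V y $ j)
      + (\<Sum>j\<in>UNIV. \<Sum>l\<in>UNIV. christ G y l k j * F y $ i $ l * V y $ j)"
    unfolding V_parallel[OF y] F_parallel[OF y]
    by (simp add: sum.distrib sum_subtractf sum_negf sum_distrib_left sum_distrib_right ring_distribs mult_ac)
  also have "(\<Sum>j\<in>UNIV. \<Sum>l\<in>UNIV. christ G y l k j * F y $ i $ l * V y $ j)
      = (\<Sum>j\<in>UNIV. \<Sum>l\<in>UNIV. F y $ i $ j * christ G y j k l * V y $ l)"
    by (subst sum.swap) (simp add: mult_ac)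
  also have "(\<Sum>j\<in>UNIV. \<Sum>l\<in>UNIV. christ G y i k l * F y $ l $ j * V y $ j) = (\<Sum>l\<in>UNIV. christ G y i k l * W y l)"
    unfolding W_def by (subst sum.swap) (simp add: sum_distrib_left mult_ac)
  finally show ?thesis by simp
qed

lemma D3: "y \<in> U \<Longrightarrow> pd k (\<lambda>z. w z i) y = (\<Sum>l\<in>UNIV. christ G y l k i * w y l)"
proof -
  assume y: "y \<in> U"
  have "pd k (\<lambda>z. w z i) y = (\<Sum>j\<in>UNIV. pd k (\<lambda>z. G z $ i $ j * W z j) y)"
    unfolding w_def by (rule pd_sum) (auto intro!: differentiable_mult dG dW y)
  also have "\<dots> = (\<Sum>j\<in>UNIV. G y $ i $ j * pd k (\<lambda>z. W z j) y + pd k (\<lambda>z. G z $ i $ j) y * W y j)"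
    by (rule sum.cong[OF refl]) (rule pd_mult[OF dG[OF y] dW[OF y]])
  also have "\<dots> = - (\<Sum>j\<in>UNIV. \<Sum>l\<in>UNIV. G y $ i $ j * christ G y j k l * W y l)
      + (\<Sum>j\<in>UNIV. \<Sum>l\<in>UNIV. christ G y l k i * G y $ l $ j * W y j)
      + (\<Sum>j\<in>UNIV. \<Sum>l\<in>UNIV. christ G y l k j * G y $ i $ l * W y j)"
    unfolding D2[OF y] D1[OF y]
    by (simp add: sum.distrib sum_subtractf sum_negf sum_distrib_left sum_distrib_right ring_distribs mult_ac)
  also have "(\<Sum>j\<in>UNIV. \<Sum>l\<in>UNIV. christ G y l k j * G y $ i $ l * W y j)
      = (\<Sum>j\<in>UNIV. \<Sum>l\<in>UNIV. G y $ i $ j * christ G y j k l * W y l)"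
    by (subst sum.swap) (simp add: mult_ac)
  also have "(\<Sum>j\<in>UNIV. \<Sum>l\<in>UNIV. christ G y l k i * G y $ l $ j * W y j) = (\<Sum>l\<in>UNIV. christ G y l k i * w y l)"
    unfolding w_def by (subst sum.swap) (simp add: sum_distrib_left mult_ac)
  finally show ?thesis by simp
qed

lemma D4: "y \<in> U \<Longrightarrow> pd k (\<lambda>z. h z i j) y = (\<Sum>l\<in>UNIV. christ G y l k i * h y l j + christ G y l k j * h y i l)"
proof -
  assume y: "y \<in> U"
  have "pd k (\<lambda>z. h z i j) y = pd k (\<lambda>z. G z $ i $ j) y + pd k (\<lambda>z. w z i * w z j) y"
    unfolding h_def by (rule pd_add) (auto intro!: differentiable_mult dG dw y)
  also have "\<dots> = pd k (\<lambda>z. G z $ i $ j) y + (w y i * pd k (\<lambda>z. w z j) y + pd k (\<lambda>z. w z i) y * w y j)"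
    by (simp add: pd_mult[OF dw[OF y] dw[OF y]])
  also have "\<dots> = (\<Sum>l\<in>UNIV. christ G y l k i * h y l j + christ G y l k j * h y i l)"
    unfolding D1[OF y] D3[OF y] h_def
    by (simp add: sum.distrib sum_distrib_left sum_distrib_right ring_distribs mult_ac)
  finally show ?thesis .
qed

lemma W_vec: "(F y *v V y) $ i = W y i" unfolding W_def matrix_vector_mult_def by simp
lemma w_vec: "(G y *v (F y *v V y)) $ i = w y i" unfolding w_def W_def matrix_vector_mult_def by simp

lemma Ww: "y \<in> U \<Longrightarrow> (\<Sum>i\<in>UNIV. W y i * w y i) = 1"
proof -
  assume y: "y \<in> U"
  have tf: "transpose (F y) ** G y = G y ** F y" and ff: "F y ** F y = mat 1"
    using pkn y unfolding para_kaehler_norden_def by blast+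
  have v1: "V y \<bullet> (G y *v V y) = 1" using up y unfolding unit_parallel_def by blast
  have "(\<Sum>i\<in>UNIV. W y i * w y i) = (F y *v V y) \<bullet> (G y *v (F y *v V y))"
    unfolding inner_vec_def W_vec w_vec by simp
  also have "\<dots> = (V y v* transpose (F y)) \<bullet> (G y *v (F y *v V y))" by simp
  also have "\<dots> = V y \<bullet> (transpose (F y) *v (G y *v (F y *v V y)))" by (rule dot_lmul_matrix)
  also have "transpose (F y) *v (G y *v (F y *v V y)) = ((transpose (F y) ** G y) ** F y) *v V y"
    by (simp add: matrix_vector_mul_assoc matrix_mul_assoc)
  also have "\<dots> = G y *v V y" unfolding tf by (simp add: matrix_mul_assoc[symmetric] ff)
  finally show ?thesis using v1 by simp
qed

lemma Wa': "y \<in> U \<Longrightarrow> (\<Sum>i\<in>UNIV. W y i * a y i) = 0"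
  using Wa unfolding W_vec a_def by blast

lemma hsym: "y \<in> U \<Longrightarrow> h y i j = h y j i" unfolding h_def using Gsym by (simp add: mult.commute)
lemma hisym: "y \<in> U \<Longrightarrow> hi y i j = hi y j i" unfolding hi_def using gisym by (simp add: mult_ac)

lemma gi_w: "y \<in> U \<Longrightarrow> (\<Sum>l\<in>UNIV. ginv G y $ i $ l * w y l) = W y i"
proof -
  assume y: "y \<in> U"
  have "(\<Sum>l\<in>UNIV. ginv G y $ i $ l * w y l) = (\<Sum>l\<in>UNIV. \<Sum>m\<in>UNIV. ginv G y $ i $ l * G y $ l $ m * W y m)"
    unfolding w_def by (simp add: sum_distrib_left mult_ac)
  also have "\<dots> = (\<Sum>m\<in>UNIV. \<Sum>l\<in>UNIV. ginv G y $ i $ l * G y $ l $ m * W y m)" by (rule sum.swap)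
  also have "\<dots> = (\<Sum>m\<in>UNIV. (\<Sum>l\<in>UNIV. ginv G y $ i $ l * G y $ l $ m) * W y m)" by (simp add: sum_distrib_right)
  finally have "(\<Sum>l\<in>UNIV. ginv G y $ i $ l * w y l) = (\<Sum>m\<in>UNIV. (\<Sum>l\<in>UNIV. ginv G y $ i $ l * G y $ l $ m) * W y m)" .
  then show ?thesis unfolding gi_G[OF y] by (simp add: kd_sym[of i])
qed

lemma W_G: "y \<in> U \<Longrightarrow> (\<Sum>l\<in>UNIV. W y l * G y $ l $ j) = w y j"
proof -
  assume y: "y \<in> U"
  have "(\<Sum>l\<in>UNIV. W y l * G y $ l $ j) = (\<Sum>l\<in>UNIV. G y $ j $ l * W y l)"
    by (rule sum.cong[OF refl]) (simp add: Gsym[OF y, of _ j] mult.commute)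
  then show ?thesis unfolding w_def by simp
qed

lemma hinv: "y \<in> U \<Longrightarrow> (\<Sum>l\<in>UNIV. hi y i l * h y l j) = kd i j"
proof -
  assume y: "y \<in> U"
  have "(\<Sum>l\<in>UNIV. hi y i l * h y l j) = (\<Sum>l\<in>UNIV. ginv G y $ i $ l * G y $ l $ j)
      + (\<Sum>l\<in>UNIV. ginv G y $ i $ l * w y l) * w y j - (1/2) * W y i * (\<Sum>l\<in>UNIV. W y l * G y $ l $ j)
      - (1/2) * W y i * (\<Sum>l\<in>UNIV. W y l * w y l) * w y j"
    unfolding hi_def h_def
    by (simp add: ring_distribs sum.distrib sum_subtractf sum_distrib_left sum_distrib_right mult_ac)
  then show ?thesis unfolding gi_G[OF y] gi_w[OF y] W_G[OF y] Ww[OF y] by simp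
qed

lemma bdef: "y \<in> U \<Longrightarrow> b y k = (\<Sum>l\<in>UNIV. hi y k l * a y l)"
proof -
  assume y: "y \<in> U"
  have "(\<Sum>l\<in>UNIV. hi y k l * a y l) = (\<Sum>l\<in>UNIV. ginv G y $ k $ l * a y l) - (1/2) * W y k * (\<Sum>l\<in>UNIV. W y l * a y l)"
    unfolding hi_def by (simp add: ring_distribs sum_subtractf sum_distrib_left mult_ac)
  then show ?thesis using Wa'[OF y] by (simp add: b_def gradc_def a_def)
qed

lemma alg0_at: "y \<in> U \<Longrightarrow> alg0 (hi y) (h y) (a y) (b y)"
  unfolding alg0_def using hsym hisym hinv bdef by blast

lemma Gt_entry: "Gt y $ i $ j = \<alpha> y * h y i j"
  unfolding deformed_metric_def h_def w_vec[symmetric] by simp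

lemma ginv_Gt: "y \<in> U \<Longrightarrow> ginv Gt y $ i $ j = (1 / \<alpha> y) * hi y i j"
proof -
  assume y: "y \<in> U"
  have ap: "\<alpha> y \<noteq> 0" using apos y by force
  have "Gt y ** (\<chi> i j. (1 / \<alpha> y) * hi y i j) = mat 1"
  proof -
    have "(\<Sum>l\<in>UNIV. \<alpha> y * h y i l * ((1 / \<alpha> y) * hi y l j)) = kd i j" for i j
    proof -
      have "(\<Sum>l\<in>UNIV. \<alpha> y * h y i l * ((1 / \<alpha> y) * hi y l j)) = (\<Sum>l\<in>UNIV. hi y j l * h y l i)"
        by (rule sum.cong[OF refl]) (use ap hsym[OF y, of i] hisym[OF y, of _ j] in simp)
      then show ?thesis unfolding hinv[OF y] by (simp add: kd_sym)
    qed
    then show ?thesis unfolding matrix_matrix_mult_def mat_def Gt_entry[symmetric] vec_eq_iff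
      by (simp add: kd_def Gt_entry)
  qed
  then have "matrix_inv (Gt y) = (\<chi> i j. (1 / \<alpha> y) * hi y i j)" by (rule minv_unique)
  then show ?thesis unfolding ginv_def by simp
qed

lemma Aw_A: "y \<in> U \<Longrightarrow> Aw y k i j = alg0.A (h y) (a y) (b y) (1/(2*\<alpha> y)) k i j"
  by (simp add: Aw_def alg0.A_def[OF alg0_at])

lemma Aw_sym: "Aw y k i j = Aw y k j i" if "y \<in> U"
  unfolding Aw_def using hsym[OF that, of i j] by (simp add: algebra_simps)

lemma christ_Gt: "y \<in> U \<Longrightarrow> christ Gt y k i j = christ G y k i j + Aw y k i j"
proof -
  assume y: "y \<in> U"
  have ap: "\<alpha> y > 0" using apos y by blast
  show ?thesis
  proof (rule christ_compat[where C = "\<lambda>k i j. christ G y k i j + Aw y k i j"])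
    show "Gt y $ i $ j = Gt y $ j $ i" for i j unfolding Gt_entry using hsym[OF y] by simp
    show "(\<Sum>l\<in>UNIV. ginv Gt y $ k $ l * Gt y $ l $ j) = kd k j" for k j
      unfolding ginv_Gt[OF y] Gt_entry using hinv[OF y, of k j] ap by simp
    show "christ G y k i j + Aw y k i j = christ G y k j i + Aw y k j i" for k i j
      using christ_sym[OF y] Aw_sym[OF y] by simp
    show "pd k (\<lambda>z. Gt z $ i $ j) y = (\<Sum>l\<in>UNIV. (christ G y l k i + Aw y l k i) * Gt y $ l $ j
       + (christ G y l k j + Aw y l k j) * Gt y $ i $ l)" for k i j
    proof -
      have "pd k (\<lambda>z. Gt z $ i $ j) y = pd k (\<lambda>z. \<alpha> z * h z i j) y" unfolding Gt_entry ..
      also have "\<dots> = \<alpha> y * pd k (\<lambda>z. h z i j) y + a y k * h y i j"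
        unfolding a_def using pd_mult[OF d\<alpha>[OF y] dh[OF y]] by simp
      also have "\<dots> = \<alpha> y * (\<Sum>l\<in>UNIV. christ G y l k i * h y l j + christ G y l k j * h y i l)
          + \<alpha> y * (\<Sum>l\<in>UNIV. Aw y l k i * h y l j + Aw y l k j * h y i l)"
        unfolding D4[OF y] Aw_A[OF y] alg0.compatA[OF alg0_at[OF y]] using ap by simp
      also have "\<dots> = (\<Sum>l\<in>UNIV. (christ G y l k i + Aw y l k i) * Gt y $ l $ j
       + (christ G y l k j + Aw y l k j) * Gt y $ i $ l)"
        unfolding Gt_entry by (simp add: sum_distrib_left sum.distrib[symmetric] algebra_simps)
      finally show ?thesis .
    qed
  qed
qed

end


lemma pd_neg:
  fixes f :: "real^'n::finite \<Rightarrow> real"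
  assumes "f differentiable (at x)"
  shows "pd i (\<lambda>y. - f y) x = - pd i f x"
  using pd_cmult[OF assms, of i "-1"] by simp

context setting
begin

definition "dhx x \<mu> i j = pd \<mu> (\<lambda>y. h y i j) x"
definition "dax x \<mu> \<nu> = pd \<mu> (\<lambda>y. a y \<nu>) x"
definition "dbx x \<mu> k = pd \<mu> (\<lambda>y. b y k) x"

lemma dbh_at: "x \<in> U \<Longrightarrow> (\<Sum>r\<in>UNIV. dbx x \<mu> r * h x r s + b x r * dhx x \<mu> r s) = dax x \<mu> s"
proof -
  assume x: "x \<in> U"
  have "pd \<mu> (\<lambda>y. \<Sum>r\<in>UNIV. b y r * h y r s) x = pd \<mu> (\<lambda>y. a y s) x"
    by (rule pd_cong[OF U x]) (rule alg0.hb[OF alg0_at])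
  moreover have "pd \<mu> (\<lambda>y. \<Sum>r\<in>UNIV. b y r * h y r s) x = (\<Sum>r\<in>UNIV. pd \<mu> (\<lambda>y. b y r * h y r s) x)"
    by (rule pd_sum) (auto intro!: differentiable_mult db dh x)
  moreover have "pd \<mu> (\<lambda>y. b y r * h y r s) x = b x r * dhx x \<mu> r s + dbx x \<mu> r * h x r s" for r
    unfolding dhx_def dbx_def by (rule pd_mult[OF db[OF x] dh[OF x]])
  ultimately show ?thesis unfolding dax_def by (simp add: add.commute)
qed

lemma alg_at: "x \<in> U \<Longrightarrow> alg (hi x) (h x) (a x) (b x) (christ G x) (dhx x) (dax x) (dbx x)"
  unfolding alg_def alg_axioms_def
  using alg0_at christ_sym dbh_at D4 unfolding dhx_def by blast

lemma pd_christ_Gt: "x \<in> U \<Longrightarrow> pd \<mu> (\<lambda>y. christ Gt y r \<nu> s) x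
   = pd \<mu> (\<lambda>y. christ G y r \<nu> s) x + pd \<mu> (\<lambda>y. Aw y r \<nu> s) x"
proof -
  assume x: "x \<in> U"
  have "pd \<mu> (\<lambda>y. christ Gt y r \<nu> s) x = pd \<mu> (\<lambda>y. christ G y r \<nu> s + Aw y r \<nu> s) x"
    by (rule pd_cong[OF U x]) (rule christ_Gt)
  also have "\<dots> = pd \<mu> (\<lambda>y. christ G y r \<nu> s) x + pd \<mu> (\<lambda>y. Aw y r \<nu> s) x"
    by (rule pd_add[OF dchrist[OF x] dAw[OF x]])
  finally show ?thesis .
qed

lemma pd_c: "x \<in> U \<Longrightarrow> pd \<mu> (\<lambda>y. 1 / (2 * \<alpha> y)) x = - 2 * (1 / (2 * \<alpha> x))^2 * a x \<mu>"
proof -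
  assume x: "x \<in> U"
  have ap: "\<alpha> x > 0" using apos x by blast
  have d2: "(\<lambda>y. 2 * \<alpha> y) differentiable (at x)" by (intro differentiable_mult differentiable_const d\<alpha>[OF x])
  have "pd \<mu> (\<lambda>y. 1 / (2 * \<alpha> y)) x = (0 * (2 * \<alpha> x) - 1 * pd \<mu> (\<lambda>y. 2 * \<alpha> y) x) / ((2 * \<alpha> x) * (2 * \<alpha> x))"
    using pd_divide[OF differentiable_const d2, of \<mu>] ap by simp
  also have "pd \<mu> (\<lambda>y. 2 * \<alpha> y) x = 2 * a x \<mu>" unfolding a_def by (rule pd_cmult[OF d\<alpha>[OF x]])
  finally show ?thesis using ap by (simp add: power2_eq_square field_simps)
qed

lemma pd_Aw: "x \<in> U \<Longrightarrow> pd \<mu> (\<lambda>y. Aw y r \<nu> s) x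
   = alg.pdA (h x) (a x) (b x) (1 / (2 * \<alpha> x)) (dhx x) (dax x) (dbx x) \<mu> r \<nu> s"
proof -
  assume x: "x \<in> U"
  define Q where "Q y = kd r s * a y \<nu> + kd r \<nu> * a y s - b y r * h y \<nu> s" for y
  have dQ: "Q differentiable (at x)" unfolding Q_def
    by (intro differentiable_mult differentiable_add differentiable_diff differentiable_const da db dh x)
  have pQ: "pd \<mu> Q x = kd r s * dax x \<mu> \<nu> + kd r \<nu> * dax x \<mu> s - (b x r * dhx x \<mu> \<nu> s + dbx x \<mu> r * h x \<nu> s)"
  proof -
    have "pd \<mu> Q x = pd \<mu> (\<lambda>y. kd r s * a y \<nu> + kd r \<nu> * a y s) x - pd \<mu> (\<lambda>y. b y r * h y \<nu> s) x"
      unfolding Q_def by (rule pd_diff) (intro differentiable_mult differentiable_add differentiable_const da db dh x)+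
    also have "pd \<mu> (\<lambda>y. kd r s * a y \<nu> + kd r \<nu> * a y s) x = kd r s * dax x \<mu> \<nu> + kd r \<nu> * dax x \<mu> s"
      unfolding dax_def
      by (subst pd_add) (auto intro!: differentiable_mult differentiable_const da x simp: pd_cmult[OF da[OF x]])
    also have "pd \<mu> (\<lambda>y. b y r * h y \<nu> s) x = b x r * dhx x \<mu> \<nu> s + dbx x \<mu> r * h x \<nu> s"
      unfolding dhx_def dbx_def by (rule pd_mult[OF db[OF x] dh[OF x]])
    finally show ?thesis .
  qed
  have "pd \<mu> (\<lambda>y. Aw y r \<nu> s) x = pd \<mu> (\<lambda>y. 1 / (2 * \<alpha> y) * Q y) x" unfolding Aw_def Q_def ..
  also have "\<dots> = 1 / (2 * \<alpha> x) * pd \<mu> Q x + pd \<mu> (\<lambda>y. 1 / (2 * \<alpha> y)) x * Q x"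
    by (rule pd_mult[OF dc[OF x] dQ])
  also have "\<dots> = alg.pdA (h x) (a x) (b x) (1 / (2 * \<alpha> x)) (dhx x) (dax x) (dbx x) \<mu> r \<nu> s"
    unfolding alg.pdA_def[OF alg_at[OF x]] pQ pd_c[OF x] Q_def by (simp add: algebra_simps)
  finally show ?thesis .
qed

lemma riem_Gt: "x \<in> U \<Longrightarrow> riem Gt x r s \<mu> \<nu> = riem G x r s \<mu> \<nu>
  + (alg.pdA (h x) (a x) (b x) (1 / (2 * \<alpha> x)) (dhx x) (dax x) (dbx x) \<mu> r \<nu> s
   - alg.pdA (h x) (a x) (b x) (1 / (2 * \<alpha> x)) (dhx x) (dax x) (dbx x) \<nu> r \<mu> s
   + (\<Sum>l\<in>UNIV. christ G x r \<mu> l * alg0.A (h x) (a x) (b x) (1 / (2 * \<alpha> x)) l \<nu> s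
      + alg0.A (h x) (a x) (b x) (1 / (2 * \<alpha> x)) r \<mu> l * christ G x l \<nu> s
      + alg0.A (h x) (a x) (b x) (1 / (2 * \<alpha> x)) r \<mu> l * alg0.A (h x) (a x) (b x) (1 / (2 * \<alpha> x)) l \<nu> s
      - christ G x r \<nu> l * alg0.A (h x) (a x) (b x) (1 / (2 * \<alpha> x)) l \<mu> s
      - alg0.A (h x) (a x) (b x) (1 / (2 * \<alpha> x)) r \<nu> l * christ G x l \<mu> s
      - alg0.A (h x) (a x) (b x) (1 / (2 * \<alpha> x)) r \<nu> l * alg0.A (h x) (a x) (b x) (1 / (2 * \<alpha> x)) l \<mu> s))"
proof -
  assume x: "x \<in> U"
  have e: "christ Gt x k i j = christ G x k i j + alg0.A (h x) (a x) (b x) (1 / (2 * \<alpha> x)) k i j" for k i j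
    using christ_Gt[OF x] Aw_A[OF x] by simp
  show ?thesis
    unfolding riem_def pd_christ_Gt[OF x] pd_Aw[OF x] e
    by (simp add: algebra_simps sum.distrib sum_subtractf)
qed

lemma ricci_Gt: "x \<in> U \<Longrightarrow> ricci Gt x s \<nu> = ricci G x s \<nu>
  + alg.X (h x) (a x) (b x) (1 / (2 * \<alpha> x)) (christ G x) (dhx x) (dax x) (dbx x) s \<nu>"
  unfolding ricci_def alg.X_def[OF alg_at] by (simp add: riem_Gt sum.distrib)

lemma scal_Gt: "x \<in> U \<Longrightarrow> scal Gt x = (1 / \<alpha> x) * ((\<Sum>s\<in>UNIV. \<Sum>\<nu>\<in>UNIV. hi x s \<nu> * ricci G x s \<nu>)
  + alg.K (hi x) (alg.X (h x) (a x) (b x) (1 / (2 * \<alpha> x)) (christ G x) (dhx x) (dax x) (dbx x)))"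
  unfolding scal_def alg.K_def[OF alg_at] ginv_Gt ricci_Gt
  by (simp add: ring_distribs sum.distrib sum_distrib_left mult_ac)

lemma pdW_diff: "x \<in> U \<Longrightarrow> pd \<nu> (\<lambda>z. W z r) differentiable (at x)"
proof -
  assume x: "x \<in> U"
  have "(\<lambda>y. - (\<Sum>l\<in>UNIV. christ G y r \<nu> l * W y l)) differentiable (at x)"
    by (intro differentiable_minus differentiable_sum differentiable_mult dchrist dW x ballI) simp_all
  then show ?thesis by (rule differentiable_cong[OF _ U x]) (simp add: D2)
qed

lemma ddW: "x \<in> U \<Longrightarrow> pd \<mu> (pd \<nu> (\<lambda>z. W z r)) x
   = (\<Sum>l\<in>UNIV. \<Sum>p\<in>UNIV. christ G x r \<nu> l * christ G x l \<mu> p * W x p)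
     - (\<Sum>l\<in>UNIV. pd \<mu> (\<lambda>y. christ G y r \<nu> l) x * W x l)"
proof -
  assume x: "x \<in> U"
  have "pd \<mu> (pd \<nu> (\<lambda>z. W z r)) x = pd \<mu> (\<lambda>y. - (\<Sum>l\<in>UNIV. christ G y r \<nu> l * W y l)) x"
    by (rule pd_cong[OF U x]) (rule D2)
  also have "\<dots> = - pd \<mu> (\<lambda>y. \<Sum>l\<in>UNIV. christ G y r \<nu> l * W y l) x"
    by (rule pd_neg) (intro differentiable_sum differentiable_mult dchrist dW x ballI, simp_all)
  also have "pd \<mu> (\<lambda>y. \<Sum>l\<in>UNIV. christ G y r \<nu> l * W y l) x = (\<Sum>l\<in>UNIV. pd \<mu> (\<lambda>y. christ G y r \<nu> l * W y l) x)"
    by (rule pd_sum) (auto intro!: differentiable_mult dchrist dW x)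
  also have "\<dots> = (\<Sum>l\<in>UNIV. christ G x r \<nu> l * pd \<mu> (\<lambda>y. W y l) x + pd \<mu> (\<lambda>y. christ G y r \<nu> l) x * W x l)"
    by (rule sum.cong[OF refl]) (rule pd_mult[OF dchrist[OF x] dW[OF x]])
  finally show ?thesis unfolding D2[OF x]
    by (simp add: sum.distrib sum_subtractf sum_negf sum_distrib_left mult_ac)
qed

lemma riemW: "x \<in> U \<Longrightarrow> (\<Sum>s\<in>UNIV. riem G x r s \<mu> \<nu> * W x s) = 0"
proof -
  assume x: "x \<in> U"
  have sch: "pd \<mu> (pd \<nu> (\<lambda>z. W z r)) x = pd \<nu> (pd \<mu> (\<lambda>z. W z r)) x"
    by (rule schwarz[OF U x dW pdW_diff[OF x] pdW_diff[OF x]])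
  have "(\<Sum>s\<in>UNIV. riem G x r s \<mu> \<nu> * W x s)
     = ((\<Sum>l\<in>UNIV. \<Sum>p\<in>UNIV. christ G x r \<mu> l * christ G x l \<nu> p * W x p)
     - (\<Sum>l\<in>UNIV. pd \<nu> (\<lambda>y. christ G y r \<mu> l) x * W x l))
     - ((\<Sum>l\<in>UNIV. \<Sum>p\<in>UNIV. christ G x r \<nu> l * christ G x l \<mu> p * W x p)
     - (\<Sum>l\<in>UNIV. pd \<mu> (\<lambda>y. christ G y r \<nu> l) x * W x l))"
  proof -
    have "(\<Sum>s\<in>UNIV. riem G x r s \<mu> \<nu> * W x s) = (\<Sum>s\<in>UNIV. pd \<mu> (\<lambda>y. christ G y r \<nu> s) x * W x s)
      - (\<Sum>s\<in>UNIV. pd \<nu> (\<lambda>y. christ G y r \<mu> s) x * W x s)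
      + (\<Sum>s\<in>UNIV. \<Sum>l\<in>UNIV. christ G x r \<mu> l * christ G x l \<nu> s * W x s)
      - (\<Sum>s\<in>UNIV. \<Sum>l\<in>UNIV. christ G x r \<nu> l * christ G x l \<mu> s * W x s)"
      unfolding riem_def by (simp add: algebra_simps sum.distrib sum_subtractf sum_distrib_right sum_distrib_left)
    moreover have "(\<Sum>s\<in>UNIV. \<Sum>l\<in>UNIV. christ G x r \<mu> l * christ G x l \<nu> s * W x s)
        = (\<Sum>l\<in>UNIV. \<Sum>p\<in>UNIV. christ G x r \<mu> l * christ G x l \<nu> p * W x p)" by (rule sum.swap)
    moreover have "(\<Sum>s\<in>UNIV. \<Sum>l\<in>UNIV. christ G x r \<nu> l * christ G x l \<mu> s * W x s)
        = (\<Sum>l\<in>UNIV. \<Sum>p\<in>UNIV. christ G x r \<nu> l * christ G x l \<mu> p * W x p)" by (rule sum.swap)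
    ultimately show ?thesis by simp
  qed
  also have "\<dots> = 0" using sch unfolding ddW[OF x] by simp
  finally show ?thesis .
qed

lemma RicWW: "x \<in> U \<Longrightarrow> (\<Sum>s\<in>UNIV. \<Sum>\<nu>\<in>UNIV. W x s * W x \<nu> * ricci G x s \<nu>) = 0"
proof -
  assume x: "x \<in> U"
  have "(\<Sum>s\<in>UNIV. \<Sum>\<nu>\<in>UNIV. W x s * W x \<nu> * ricci G x s \<nu>)
      = (\<Sum>s\<in>UNIV. \<Sum>\<nu>\<in>UNIV. \<Sum>r\<in>UNIV. W x \<nu> * (riem G x r s r \<nu> * W x s))"
    unfolding ricci_def by (simp add: sum_distrib_left mult_ac)
  also have "\<dots> = (\<Sum>\<nu>\<in>UNIV. \<Sum>r\<in>UNIV. \<Sum>s\<in>UNIV. W x \<nu> * (riem G x r s r \<nu> * W x s))"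
  proof -
    have "(\<Sum>s\<in>UNIV. \<Sum>\<nu>\<in>UNIV. \<Sum>r\<in>UNIV. W x \<nu> * (riem G x r s r \<nu> * W x s))
       = (\<Sum>\<nu>\<in>UNIV. \<Sum>s\<in>UNIV. \<Sum>r\<in>UNIV. W x \<nu> * (riem G x r s r \<nu> * W x s))" by (rule sum.swap)
    also have "\<dots> = (\<Sum>\<nu>\<in>UNIV. \<Sum>r\<in>UNIV. \<Sum>s\<in>UNIV. W x \<nu> * (riem G x r s r \<nu> * W x s))"
      by (rule sum.cong[OF refl], rule sum.swap)
    finally show ?thesis .
  qed
  also have "\<dots> = 0" by (simp add: sum_distrib_left[symmetric] riemW[OF x])
  finally show ?thesis .
qed

lemma hi_ricci: "x \<in> U \<Longrightarrow> (\<Sum>s\<in>UNIV. \<Sum>\<nu>\<in>UNIV. hi x s \<nu> * ricci G x s \<nu>) = scal G x"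
proof -
  assume x: "x \<in> U"
  have "(\<Sum>s\<in>UNIV. \<Sum>\<nu>\<in>UNIV. hi x s \<nu> * ricci G x s \<nu>) = scal G x
     - (1/2) * (\<Sum>s\<in>UNIV. \<Sum>\<nu>\<in>UNIV. W x s * W x \<nu> * ricci G x s \<nu>)"
    unfolding hi_def scal_def by (simp add: algebra_simps sum_subtractf sum_distrib_left)
  then show ?thesis unfolding RicWW[OF x] by simp
qed

lemma dgi_formula: "x \<in> U \<Longrightarrow> pd k (\<lambda>y. ginv G y $ i $ m) x
   = - (\<Sum>l\<in>UNIV. christ G x m k l * ginv G x $ i $ l + christ G x i k l * ginv G x $ l $ m)"
proof -
  assume x: "x \<in> U"
  define P where "P i l = pd k (\<lambda>y. ginv G y $ i $ l) x" for i l
  define g where "g = ginv G x"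
  define dG where "dG l j = pd k (\<lambda>y. G y $ l $ j) x" for l j
  have s1: "(\<Sum>l\<in>UNIV. g $ i $ l * dG l j + P i l * G x $ l $ j) = 0" for i j
  proof -
    have "pd k (\<lambda>y. \<Sum>l\<in>UNIV. ginv G y $ i $ l * G y $ l $ j) x = pd k (\<lambda>y. kd i j) x"
      by (rule pd_cong[OF U x]) (rule gi_G)
    moreover have "pd k (\<lambda>y. \<Sum>l\<in>UNIV. ginv G y $ i $ l * G y $ l $ j) x
        = (\<Sum>l\<in>UNIV. pd k (\<lambda>y. ginv G y $ i $ l * G y $ l $ j) x)"
      by (rule pd_sum) (auto intro!: differentiable_mult dgi dG x)
    moreover have "pd k (\<lambda>y. ginv G y $ i $ l * G y $ l $ j) x = g $ i $ l * dG l j + P i l * G x $ l $ j" for l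
      unfolding g_def dG_def P_def by (rule pd_mult[OF dgi[OF x] dG[OF x]])
    ultimately show ?thesis by simp
  qed
  have s3: "(\<Sum>l\<in>UNIV. P i l * G x $ l $ j) = - (\<Sum>l\<in>UNIV. g $ i $ l * dG l j)" for i j
    using s1[of i j] by (simp add: sum.distrib eq_neg_iff_add_eq_0 add.commute)
  have s2: "P i m = (\<Sum>j\<in>UNIV. (\<Sum>l\<in>UNIV. P i l * G x $ l $ j) * g $ j $ m)"
  proof -
    have "(\<Sum>j\<in>UNIV. (\<Sum>l\<in>UNIV. P i l * G x $ l $ j) * g $ j $ m) = (\<Sum>j\<in>UNIV. \<Sum>l\<in>UNIV. P i l * (G x $ l $ j * g $ j $ m))"
      by (simp add: sum_distrib_left sum_distrib_right mult_ac)
    also have "\<dots> = (\<Sum>l\<in>UNIV. \<Sum>j\<in>UNIV. P i l * (G x $ l $ j * g $ j $ m))" by (rule sum.swap)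
    also have "\<dots> = (\<Sum>l\<in>UNIV. P i l * kd l m)" unfolding sum_distrib_left[symmetric] g_def G_gi[OF x] ..
    finally show ?thesis by simp
  qed
  have s4: "(\<Sum>j\<in>UNIV. (\<Sum>l\<in>UNIV. g $ i $ l * dG l j) * g $ j $ m)
      = (\<Sum>l\<in>UNIV. christ G x m k l * g $ i $ l + christ G x i k l * g $ l $ m)"
  proof -
    have "(\<Sum>j\<in>UNIV. (\<Sum>l\<in>UNIV. g $ i $ l * dG l j) * g $ j $ m)
      = (\<Sum>j\<in>UNIV. \<Sum>l\<in>UNIV. \<Sum>p\<in>UNIV. g $ i $ l * christ G x p k l * (G x $ p $ j * g $ j $ m))
      + (\<Sum>j\<in>UNIV. \<Sum>l\<in>UNIV. \<Sum>p\<in>UNIV. (g $ i $ l * G x $ l $ p) * christ G x p k j * g $ j $ m)"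
      unfolding dG_def D1[OF x] by (simp add: sum.distrib sum_distrib_left sum_distrib_right ring_distribs mult_ac)
    also have "(\<Sum>j\<in>UNIV. \<Sum>l\<in>UNIV. \<Sum>p\<in>UNIV. g $ i $ l * christ G x p k l * (G x $ p $ j * g $ j $ m))
      = (\<Sum>l\<in>UNIV. \<Sum>p\<in>UNIV. \<Sum>j\<in>UNIV. g $ i $ l * christ G x p k l * (G x $ p $ j * g $ j $ m))"
      by (subst sum.swap) (rule sum.cong[OF refl], rule sum.swap)
    also have "\<dots> = (\<Sum>l\<in>UNIV. \<Sum>p\<in>UNIV. g $ i $ l * christ G x p k l * kd p m)"
      unfolding sum_distrib_left[symmetric] g_def G_gi[OF x] ..
    also have "(\<Sum>j\<in>UNIV. \<Sum>l\<in>UNIV. \<Sum>p\<in>UNIV. (g $ i $ l * G x $ l $ p) * christ G x p k j * g $ j $ m)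
      = (\<Sum>j\<in>UNIV. \<Sum>p\<in>UNIV. \<Sum>l\<in>UNIV. (g $ i $ l * G x $ l $ p) * (christ G x p k j * g $ j $ m))"
      by (rule sum.cong[OF refl], subst sum.swap) (simp add: mult_ac)
    also have "\<dots> = (\<Sum>j\<in>UNIV. \<Sum>p\<in>UNIV. kd i p * (christ G x p k j * g $ j $ m))"
      unfolding sum_distrib_right[symmetric] g_def gi_G[OF x] ..
    finally show ?thesis by (simp add: sum.distrib mult_ac)
  qed
  have "P i m = (\<Sum>j\<in>UNIV. (- (\<Sum>l\<in>UNIV. g $ i $ l * dG l j)) * g $ j $ m)" using s2 unfolding s3 .
  then have "P i m = - (\<Sum>j\<in>UNIV. (\<Sum>l\<in>UNIV. g $ i $ l * dG l j) * g $ j $ m)" by (simp add: sum_negf)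
  then show ?thesis unfolding s4 unfolding P_def g_def .
qed

lemma Lap1: "x \<in> U \<Longrightarrow> laplacian G \<alpha> x = (\<Sum>r\<in>UNIV. dbx x r r) + (\<Sum>l\<in>UNIV. b x l * (\<Sum>r\<in>UNIV. christ G x r r l))"
proof -
  assume x: "x \<in> U"
  have "(\<Sum>i\<in>UNIV. \<Sum>k\<in>UNIV. christ G x i i k * b x k) = (\<Sum>k\<in>UNIV. \<Sum>i\<in>UNIV. christ G x i i k * b x k)"
    by (rule sum.swap)
  then show ?thesis unfolding laplacian_def dbx_def b_def[symmetric]
    by (simp add: sum.distrib sum_distrib_left mult_ac)
qed

lemma Wdd: "x \<in> U \<Longrightarrow> (\<Sum>s\<in>UNIV. \<Sum>\<nu>\<in>UNIV. W x s * W x \<nu> * dax x s \<nu>)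
   = (\<Sum>l\<in>UNIV. a x l * (\<Sum>s\<in>UNIV. \<Sum>\<nu>\<in>UNIV. W x s * W x \<nu> * christ G x l \<nu> s))"
proof -
  assume x: "x \<in> U"
  have e: "(\<Sum>\<nu>\<in>UNIV. W x \<nu> * dax x s \<nu>) = (\<Sum>\<nu>\<in>UNIV. \<Sum>l\<in>UNIV. christ G x \<nu> s l * W x l * a x \<nu>)" for s
  proof -
    have "pd s (\<lambda>y. \<Sum>\<nu>\<in>UNIV. W y \<nu> * a y \<nu>) x = pd s (\<lambda>y. 0) x"
      by (rule pd_cong[OF U x]) (rule Wa')
    moreover have "pd s (\<lambda>y. \<Sum>\<nu>\<in>UNIV. W y \<nu> * a y \<nu>) x = (\<Sum>\<nu>\<in>UNIV. pd s (\<lambda>y. W y \<nu> * a y \<nu>) x)"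
      by (rule pd_sum) (auto intro!: differentiable_mult dW da x)
    moreover have "pd s (\<lambda>y. W y \<nu> * a y \<nu>) x = W x \<nu> * dax x s \<nu> + pd s (\<lambda>y. W y \<nu>) x * a x \<nu>" for \<nu>
      unfolding dax_def by (rule pd_mult[OF dW[OF x] da[OF x]])
    ultimately have "(\<Sum>\<nu>\<in>UNIV. W x \<nu> * dax x s \<nu>) + (\<Sum>\<nu>\<in>UNIV. pd s (\<lambda>y. W y \<nu>) x * a x \<nu>) = 0"
      by (simp add: sum.distrib)
    then show ?thesis unfolding D2[OF x]
      by (simp add: sum_negf sum_distrib_right eq_neg_iff_add_eq_0)
  qed
  have "(\<Sum>s\<in>UNIV. \<Sum>\<nu>\<in>UNIV. W x s * W x \<nu> * dax x s \<nu>) = (\<Sum>s\<in>UNIV. W x s * (\<Sum>\<nu>\<in>UNIV. W x \<nu> * dax x s \<nu>))"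
    by (simp add: sum_distrib_left mult_ac)
  also have "\<dots> = (\<Sum>s\<in>UNIV. \<Sum>\<nu>\<in>UNIV. \<Sum>l\<in>UNIV. a x \<nu> * (W x s * W x l * christ G x \<nu> s l))"
    unfolding e by (simp add: sum_distrib_left mult_ac)
  also have "\<dots> = (\<Sum>\<nu>\<in>UNIV. \<Sum>s\<in>UNIV. \<Sum>l\<in>UNIV. a x \<nu> * (W x s * W x l * christ G x \<nu> s l))"
    by (rule sum.swap)
  also have "\<dots> = (\<Sum>l\<in>UNIV. a x l * (\<Sum>s\<in>UNIV. \<Sum>\<nu>\<in>UNIV. W x s * W x \<nu> * christ G x l \<nu> s))"
    unfolding sum_distrib_left using christ_sym[OF x] by simp
  finally show ?thesis .
qed

lemma Lap2: "x \<in> U \<Longrightarrow> laplacian G \<alpha> x = alg.H (hi x) (dax x) - (\<Sum>l\<in>UNIV. a x l * alg.gam (hi x) (christ G x) l)"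
proof -
  assume x: "x \<in> U"
  define g where "g = ginv G x"
  define Hg where "Hg = (\<Sum>s\<in>UNIV. \<Sum>\<nu>\<in>UNIV. g $ s $ \<nu> * dax x s \<nu>)"
  define gg where "gg l = (\<Sum>s\<in>UNIV. \<Sum>\<nu>\<in>UNIV. g $ s $ \<nu> * christ G x l \<nu> s)" for l
  define WW where "WW l = (\<Sum>s\<in>UNIV. \<Sum>\<nu>\<in>UNIV. W x s * W x \<nu> * christ G x l \<nu> s)" for l
  have dbr: "dbx x r r = (\<Sum>j\<in>UNIV. g $ r $ j * dax x r j)
      + (\<Sum>j\<in>UNIV. (- (\<Sum>l\<in>UNIV. christ G x j r l * g $ r $ l) - (\<Sum>l\<in>UNIV. christ G x r r l * g $ l $ j)) * a x j)" for r
  proof -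
    have "dbx x r r = pd r (\<lambda>y. \<Sum>j\<in>UNIV. ginv G y $ r $ j * a y j) x"
      unfolding dbx_def b_def gradc_def a_def ..
    also have "\<dots> = (\<Sum>j\<in>UNIV. pd r (\<lambda>y. ginv G y $ r $ j * a y j) x)"
      by (rule pd_sum) (auto intro!: differentiable_mult dgi da x)
    also have "\<dots> = (\<Sum>j\<in>UNIV. g $ r $ j * dax x r j + pd r (\<lambda>y. ginv G y $ r $ j) x * a x j)"
      unfolding g_def dax_def by (rule sum.cong[OF refl]) (rule pd_mult[OF dgi[OF x] da[OF x]])
    finally show ?thesis unfolding dgi_formula[OF x] g_def
      by (simp add: sum.distrib sum_negf)
  qed
  have bl: "b x l = (\<Sum>j\<in>UNIV. g $ l $ j * a x j)" for l unfolding b_def gradc_def a_def g_def ..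
  have "laplacian G \<alpha> x = Hg - (\<Sum>r\<in>UNIV. \<Sum>j\<in>UNIV. \<Sum>l\<in>UNIV. christ G x j r l * g $ r $ l * a x j)
      - (\<Sum>r\<in>UNIV. \<Sum>j\<in>UNIV. \<Sum>l\<in>UNIV. christ G x r r l * g $ l $ j * a x j)
      + (\<Sum>l\<in>UNIV. b x l * (\<Sum>r\<in>UNIV. christ G x r r l))"
    unfolding Lap1[OF x] dbr Hg_def
    by (simp add: sum.distrib sum_subtractf sum_distrib_right ring_distribs sum_negf)
  also have "(\<Sum>r\<in>UNIV. \<Sum>j\<in>UNIV. \<Sum>l\<in>UNIV. christ G x r r l * g $ l $ j * a x j)
      = (\<Sum>l\<in>UNIV. b x l * (\<Sum>r\<in>UNIV. christ G x r r l))"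
  proof -
    have "(\<Sum>r\<in>UNIV. \<Sum>j\<in>UNIV. \<Sum>l\<in>UNIV. christ G x r r l * g $ l $ j * a x j)
        = (\<Sum>r\<in>UNIV. \<Sum>l\<in>UNIV. \<Sum>j\<in>UNIV. christ G x r r l * g $ l $ j * a x j)"
      by (rule sum.cong[OF refl], rule sum.swap)
    also have "\<dots> = (\<Sum>l\<in>UNIV. \<Sum>r\<in>UNIV. \<Sum>j\<in>UNIV. christ G x r r l * g $ l $ j * a x j)" by (rule sum.swap)
    also have "\<dots> = (\<Sum>l\<in>UNIV. \<Sum>j\<in>UNIV. \<Sum>r\<in>UNIV. christ G x r r l * g $ l $ j * a x j)"
      by (rule sum.cong[OF refl], rule sum.swap)
    also have "\<dots> = (\<Sum>l\<in>UNIV. b x l * (\<Sum>r\<in>UNIV. christ G x r r l))"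
      unfolding bl by (simp add: sum_distrib_left sum_distrib_right mult_ac)
    finally show ?thesis .
  qed
  also have "(\<Sum>r\<in>UNIV. \<Sum>j\<in>UNIV. \<Sum>l\<in>UNIV. christ G x j r l * g $ r $ l * a x j) = (\<Sum>l\<in>UNIV. a x l * gg l)"
  proof -
    have "(\<Sum>r\<in>UNIV. \<Sum>j\<in>UNIV. \<Sum>l\<in>UNIV. christ G x j r l * g $ r $ l * a x j)
        = (\<Sum>j\<in>UNIV. \<Sum>r\<in>UNIV. \<Sum>l\<in>UNIV. christ G x j r l * g $ r $ l * a x j)" by (rule sum.swap)
    also have "\<dots> = (\<Sum>l\<in>UNIV. a x l * gg l)"
      unfolding gg_def sum_distrib_left using christ_sym[OF x] by (simp add: mult_ac)
    finally show ?thesis .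
  qed
  finally have L: "laplacian G \<alpha> x = Hg - (\<Sum>l\<in>UNIV. a x l * gg l)" by simp
  have H: "alg.H (hi x) (dax x) = Hg - (1/2) * (\<Sum>s\<in>UNIV. \<Sum>\<nu>\<in>UNIV. W x s * W x \<nu> * dax x s \<nu>)"
    unfolding alg.H_def[OF alg_at[OF x]] alg.K_def[OF alg_at[OF x]] hi_def Hg_def g_def
    by (simp add: algebra_simps sum_subtractf sum_distrib_left)
  have gm: "alg.gam (hi x) (christ G x) l = gg l - (1/2) * WW l" for l
    unfolding alg.gam_def[OF alg_at[OF x]] alg.K_def[OF alg_at[OF x]] hi_def gg_def WW_def g_def
    by (simp add: algebra_simps sum_subtractf sum_distrib_left)
  show ?thesis unfolding L H gm Wdd[OF x] WW_def[symmetric]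
    by (simp add: algebra_simps sum_subtractf sum_distrib_left)
qed

lemma Nlem: "x \<in> U \<Longrightarrow> grad_normsq G \<alpha> x = (\<Sum>l\<in>UNIV. b x l * a x l)"
proof -
  assume x: "x \<in> U"
  have e: "(\<Sum>j\<in>UNIV. G x $ i $ j * b x j) = a x i" for i
  proof -
    have "(\<Sum>j\<in>UNIV. G x $ i $ j * b x j) = (\<Sum>j\<in>UNIV. \<Sum>k\<in>UNIV. G x $ i $ j * ginv G x $ j $ k * a x k)"
      unfolding b_def gradc_def a_def by (simp add: sum_distrib_left mult_ac)
    also have "\<dots> = (\<Sum>k\<in>UNIV. (\<Sum>j\<in>UNIV. G x $ i $ j * ginv G x $ j $ k) * a x k)"
      by (subst sum.swap) (simp add: sum_distrib_right)
    also have "\<dots> = a x i" unfolding G_gi[OF x] by simp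
    finally show ?thesis .
  qed
  have "grad_normsq G \<alpha> x = (\<Sum>i\<in>UNIV. b x i * (\<Sum>j\<in>UNIV. G x $ i $ j * b x j))"
    unfolding grad_normsq_def b_def by (simp add: sum_distrib_left mult_ac)
  then show ?thesis unfolding e .
qed

lemma arith_final:
  fixes al sc L Ng nn :: real
  assumes "al > 0"
  shows "(1 / al) * (sc + (-(nn-1)*(nn-6)*(1/(2*al))^2*Ng + (2-nn)*(1/(2*al))*L - nn*(1/(2*al))*L))
    = sc / al - (nn - 1) / al^2 * L - (nn - 1) * (nn - 6) / (4 * al^3) * Ng"
  using assms by (simp add: field_simps power2_eq_square power3_eq_cube)

lemma main: "x \<in> U \<Longrightarrow> scal Gt x = scal G x / \<alpha> x - (real CARD('n) - 1) / (\<alpha> x)^2 * laplacian G \<alpha> x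
   - (real CARD('n) - 1) * (real CARD('n) - 6) / (4 * (\<alpha> x)^3) * grad_normsq G \<alpha> x"
proof -
  assume x: "x \<in> U"
  note A = alg_at[OF x]
  have nn: "alg.n TYPE('n) = real CARD('n)" using alg.n_def[OF A] by simp
  have D: "alg.D (dbx x) + (\<Sum>l\<in>UNIV. b x l * alg.Gtr (christ G x) l) = laplacian G \<alpha> x"
    unfolding Lap1[OF x] alg.D_def[OF A] alg.Gtr_def[OF A] ..
  have H: "alg.H (hi x) (dax x) - (\<Sum>l\<in>UNIV. a x l * alg.gam (hi x) (christ G x) l) = laplacian G \<alpha> x"
    using Lap2[OF x] by simp
  have N: "alg.N (a x) (b x) = grad_normsq G \<alpha> x" unfolding alg.N_def[OF A] Nlem[OF x] ..
  have KX: "alg.K (hi x) (alg.X (h x) (a x) (b x) (1 / (2 * \<alpha> x)) (christ G x) (dhx x) (dax x) (dbx x))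
     = -(real CARD('n)-1)*(real CARD('n)-6)*(1/(2*\<alpha> x))^2*grad_normsq G \<alpha> x
       + (2-real CARD('n))*(1/(2*\<alpha> x))*laplacian G \<alpha> x - real CARD('n)*(1/(2*\<alpha> x))*laplacian G \<alpha> x"
    using alg.KX[OF A, of "1 / (2 * \<alpha> x)"] unfolding nn D H N .
  have ap: "\<alpha> x > 0" using apos x by blast
  show ?thesis unfolding scal_Gt[OF x] hi_ricci[OF x] KX by (rule arith_final[OF ap])
qed

end

theorem theorem3p10:
  fixes U :: "(real^'n::finite) set"
    and F G :: "real^'n \<Rightarrow> real^'n^'n"
    and V :: "real^'n \<Rightarrow> real^'n"
    and \<alpha> :: "real^'n \<Rightarrow> real"
    and m :: nat
  assumes "open U"
    and "CARD('n) = 2 * m"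
    and "para_kaehler_norden U F G"
    and "unit_parallel U G V"
    and "smooth_on U \<alpha>"
    and "\<forall>x\<in>U. \<alpha> x > 0"
    and "\<forall>x\<in>U. (\<Sum>i\<in>UNIV. (F x *v V x) $ i * pd i \<alpha> x) = 0"
  shows "\<forall>x\<in>U. scal (deformed_metric G F V \<alpha>) x =
           scal G x / \<alpha> x
           - (2 * real m - 1) / (\<alpha> x)^2 * laplacian G \<alpha> x
           - (2 * real m - 1) * (real m - 3) / (2 * (\<alpha> x)^3) * grad_normsq G \<alpha> x"
proof
  fix x assume x: "x \<in> U"
  interpret S: setting U F G V \<alpha>
    using assms unfolding setting_def by blast
  have c: "real CARD('n) = 2 * real m" using assms(2) by simp
  have ap: "\<alpha> x > 0" using assms(6) x by blast
  have "(2 * real m - 1) * (2 * real m - 6) / (4 * (\<alpha> x)^3) = (2 * real m - 1) * (real m - 3) / (2 * (\<alpha> x)^3)"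
    using ap by (simp add: field_simps)
  then show "scal (deformed_metric G F V \<alpha>) x =
           scal G x / \<alpha> x
           - (2 * real m - 1) / (\<alpha> x)^2 * laplacian G \<alpha> x
           - (2 * real m - 1) * (real m - 3) / (2 * (\<alpha> x)^3) * grad_normsq G \<alpha> x"
    using S.main[OF x] unfolding c by simp
qed


end
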